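(* Let $\mathfrak{X}=(X,\{R_r\}_{r=0}^d)$ be a $P$-polynomial association scheme with base vertex $u_0$ and Terwilliger algebra $T=T(u_0)$. Let $e,r_1,\dots,r_p$ be integers with $p-1\le e\le r_1<r_2<\cdots<r_p\le d$. Suppose that every irreducible $T$-module $W$ with endpoint $\rho(W)\le e$ is thin and satisfies $\rho(W)+\delta(W)\ge r_p$. If the $p\times p$ matrix whose $(i,h)$ entry ($i=1,\dots,p$, $h=0,1,\dots,p-1$) is \[ \prod_{s=1}^{h} c_{r_i-e+p-s}\qquad(\text{the empty product for } h=0 \text{ being } 1), \] i.e. whose $i$-th row is $\big(1,\ c_{r_i-e+p-1},\ c_{r_i-e+p-1}c_{r_i-e+p-2},\ \dots,\ c_{r_i-e+p-1}\cdots c_{r_i-e+1}\big)$, is nonsingular, then, with $S=X_{r_1}\cup X_{r_2}\cup\cdots\cup X_{r_p}$, \[ \dim\big(\mathrm{Hom}_0(S)+\mathrm{Hom}_1(S)+\cdots+\mathrm{Hom}_e(S)\big)=k_e+k_{e-1}+\cdots+k_{e-p+1}. \]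
   Context: $\mathfrak{X}$ is a symmetric $d$-class association scheme on the finite set $X$ which is $P$-polynomial with respect to the ordering $R_0,\dots,R_d$: $(X,R_1)$ is a distance-regular graph and $R_i$ is its distance-$i$ relation. $A_i$ is the adjacency matrix of $R_i$, $E_0,\dots,E_d$ the primitive idempotents of the Bose–Mesner algebra. Intersection numbers: $c_i=p^i_{1,i-1}$ ($i=1,\dots,d$). Shells: $X_r=\{x : (u_0,x)\in R_r\}$, $k_r=|X_r|$. For $z\in X_j$, $f_z\in\mathcal{F}(X)$ (real functions on $X$) is defined by $f_z(x)=1$ if $x\in X_i$ with $i\ge j$ and $(x,z)\in R_{i-j}$, and $0$ otherwise; $\mathrm{Hom}_j(X)=\mathrm{span}\{f_z: z\in X_j\}$, and for $S\subseteq X$, $\mathrm{Hom}_j(S)=\{f|_S : f\in\mathrm{Hom}_j(X)\}$ (a space of functions on $S$). Terwilliger algebra: $E_i^*$ is the diagonal matrix with $(E_i^* )_{xx}=(A_i)_{u_0x}$; $T$ is the matrix algebra generated by $A_0,\dots,A_d,E_0^*,\dots,E_d^*$, acting on $\mathbb{C}^X$. A $T$-module is a $T$-invariant subspace of $\mathbb{C}^X$; for an irreducible $T$-module $W$, its endpoint is $\rho(W)=\min\{i: E_i^*W\ne0\}$, its diameter is $\delta(W)=|\{i: E_i^*W\neq 0\}|-1$, and $W$ is thin if $\dim E_i^*W\le 1$ for all $i$. *)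

theory Defs
  imports Complex_Main "HOL-Library.Function_Algebras" "Jordan_Normal_Form.Determinant"
begin

(* The finite set X is the universe of a finite type 'a. Relations R 0, ..., R d
   (values R i for i > d are irrelevant and never used). *)

definition symmetric_assoc_scheme :: "nat \<Rightarrow> (nat \<Rightarrow> ('a::finite \<times> 'a) set) \<Rightarrow> bool" where
  "symmetric_assoc_scheme d R \<longleftrightarrow>
     R 0 = Id \<and>
     (\<forall>i\<le>d. R i \<noteq> {}) \<and>
     (\<forall>x y. \<exists>!i. i \<le> d \<and> (x, y) \<in> R i) \<and>
     (\<forall>i\<le>d. \<forall>x y. (x, y) \<in> R i \<longrightarrow> (y, x) \<in> R i) \<and>
     (\<forall>h\<le>d. \<forall>i\<le>d. \<forall>j\<le>d. \<exists>n::nat. \<forall>x y. (x, y) \<in> R h \<longrightarrow>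
         card {z. (x, z) \<in> R i \<and> (z, y) \<in> R j} = n)"

definition graph_dist_is :: "('a \<times> 'a) set \<Rightarrow> nat \<Rightarrow> 'a \<Rightarrow> 'a \<Rightarrow> bool" where
  "graph_dist_is E i x y \<longleftrightarrow> (x, y) \<in> E ^^ i \<and> (\<forall>j<i. (x, y) \<notin> E ^^ j)"

definition P_polynomial_scheme :: "nat \<Rightarrow> (nat \<Rightarrow> ('a::finite \<times> 'a) set) \<Rightarrow> bool" where
  "P_polynomial_scheme d R \<longleftrightarrow> symmetric_assoc_scheme d R \<and>
     (\<forall>i\<le>d. \<forall>x y. (x, y) \<in> R i \<longleftrightarrow> graph_dist_is (R 1) i x y)"

definition int_num :: "(nat \<Rightarrow> ('a::finite \<times> 'a) set) \<Rightarrow> nat \<Rightarrow> nat \<Rightarrow> nat \<Rightarrow> nat" where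
  "int_num R h i j = (let (x, y) = (SOME p. p \<in> R h) in card {z. (x, z) \<in> R i \<and> (z, y) \<in> R j})"

definition c_num :: "(nat \<Rightarrow> ('a::finite \<times> 'a) set) \<Rightarrow> nat \<Rightarrow> nat" where
  "c_num R i = int_num R i 1 (i - 1)"

definition shell :: "(nat \<Rightarrow> ('a \<times> 'a) set) \<Rightarrow> 'a \<Rightarrow> nat \<Rightarrow> 'a set" where
  "shell R u0 r = {x. (u0, x) \<in> R r}"

definition kval :: "(nat \<Rightarrow> ('a \<times> 'a) set) \<Rightarrow> 'a \<Rightarrow> nat \<Rightarrow> nat" where
  "kval R u0 r = card (shell R u0 r)"

definition fscale :: "'k::times \<Rightarrow> ('a \<Rightarrow> 'k) \<Rightarrow> ('a \<Rightarrow> 'k)" where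
  "fscale c f = (\<lambda>x. c * f x)"

definition fz :: "nat \<Rightarrow> (nat \<Rightarrow> ('a \<times> 'a) set) \<Rightarrow> 'a \<Rightarrow> nat \<Rightarrow> 'a \<Rightarrow> 'a \<Rightarrow> real" where
  "fz d R u0 j z = (\<lambda>x. if \<exists>i. j \<le> i \<and> i \<le> d \<and> (u0, x) \<in> R i \<and> (x, z) \<in> R (i - j) then 1 else 0)"

definition HomX :: "nat \<Rightarrow> (nat \<Rightarrow> ('a \<times> 'a) set) \<Rightarrow> 'a \<Rightarrow> nat \<Rightarrow> ('a \<Rightarrow> real) set" where
  "HomX d R u0 j = module.span (fscale :: real \<Rightarrow> _) (fz d R u0 j ` shell R u0 j)"

(* functions on S, represented as functions on X vanishing outside S *)
definition restr :: "'a set \<Rightarrow> ('a \<Rightarrow> real) \<Rightarrow> ('a \<Rightarrow> real)" where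
  "restr S f = (\<lambda>x. if x \<in> S then f x else 0)"

definition HomS :: "nat \<Rightarrow> (nat \<Rightarrow> ('a \<times> 'a) set) \<Rightarrow> 'a \<Rightarrow> nat \<Rightarrow> 'a set \<Rightarrow> ('a \<Rightarrow> real) set" where
  "HomS d R u0 j S = restr S ` HomX d R u0 j"

type_synonym 'a cmat = "'a \<Rightarrow> 'a \<Rightarrow> complex"

definition adj_mat :: "(nat \<Rightarrow> ('a \<times> 'a) set) \<Rightarrow> nat \<Rightarrow> 'a cmat" where
  "adj_mat R i = (\<lambda>x y. if (x, y) \<in> R i then 1 else 0)"

definition dual_idem :: "(nat \<Rightarrow> ('a \<times> 'a) set) \<Rightarrow> 'a \<Rightarrow> nat \<Rightarrow> 'a cmat" where
  "dual_idem R u0 i = (\<lambda>x y. if x = y \<and> (u0, x) \<in> R i then 1 else 0)"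

definition cmat_mult :: "('a::finite) cmat \<Rightarrow> 'a cmat \<Rightarrow> 'a cmat" where
  "cmat_mult M N = (\<lambda>x y. \<Sum>z\<in>UNIV. M x z * N z y)"

definition cmat_apply :: "('a::finite) cmat \<Rightarrow> ('a \<Rightarrow> complex) \<Rightarrow> ('a \<Rightarrow> complex)" where
  "cmat_apply M v = (\<lambda>x. \<Sum>y\<in>UNIV. M x y * v y)"

inductive_set terwilliger_alg :: "nat \<Rightarrow> (nat \<Rightarrow> ('a::finite \<times> 'a) set) \<Rightarrow> 'a \<Rightarrow> 'a cmat set"
  for d R u0 where
  gen_A: "i \<le> d \<Longrightarrow> adj_mat R i \<in> terwilliger_alg d R u0"
| gen_E: "i \<le> d \<Longrightarrow> dual_idem R u0 i \<in> terwilliger_alg d R u0"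
| add: "M \<in> terwilliger_alg d R u0 \<Longrightarrow> N \<in> terwilliger_alg d R u0 \<Longrightarrow> (\<lambda>x y. M x y + N x y) \<in> terwilliger_alg d R u0"
| mult: "M \<in> terwilliger_alg d R u0 \<Longrightarrow> N \<in> terwilliger_alg d R u0 \<Longrightarrow> cmat_mult M N \<in> terwilliger_alg d R u0"
| smult: "M \<in> terwilliger_alg d R u0 \<Longrightarrow> (\<lambda>x y. c * M x y) \<in> terwilliger_alg d R u0"

definition T_module :: "nat \<Rightarrow> (nat \<Rightarrow> ('a::finite \<times> 'a) set) \<Rightarrow> 'a \<Rightarrow> ('a \<Rightarrow> complex) set \<Rightarrow> bool" where
  "T_module d R u0 W \<longleftrightarrow> module.subspace (fscale :: complex \<Rightarrow> _) W \<and>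
     (\<forall>M\<in>terwilliger_alg d R u0. \<forall>v\<in>W. cmat_apply M v \<in> W)"

definition irreducible_T_module :: "nat \<Rightarrow> (nat \<Rightarrow> ('a::finite \<times> 'a) set) \<Rightarrow> 'a \<Rightarrow> ('a \<Rightarrow> complex) set \<Rightarrow> bool" where
  "irreducible_T_module d R u0 W \<longleftrightarrow> T_module d R u0 W \<and> W \<noteq> {0} \<and>
     (\<forall>W'. T_module d R u0 W' \<and> W' \<subseteq> W \<longrightarrow> W' = {0} \<or> W' = W)"

definition Estar_img :: "(nat \<Rightarrow> ('a::finite \<times> 'a) set) \<Rightarrow> 'a \<Rightarrow> nat \<Rightarrow> ('a \<Rightarrow> complex) set \<Rightarrow> ('a \<Rightarrow> complex) set" where
  "Estar_img R u0 i W = cmat_apply (dual_idem R u0 i) ` W"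

definition endpoint :: "nat \<Rightarrow> (nat \<Rightarrow> ('a::finite \<times> 'a) set) \<Rightarrow> 'a \<Rightarrow> ('a \<Rightarrow> complex) set \<Rightarrow> nat" where
  "endpoint d R u0 W = (LEAST i. i \<le> d \<and> Estar_img R u0 i W \<noteq> {0})"

definition module_diameter :: "nat \<Rightarrow> (nat \<Rightarrow> ('a::finite \<times> 'a) set) \<Rightarrow> 'a \<Rightarrow> ('a \<Rightarrow> complex) set \<Rightarrow> nat" where
  "module_diameter d R u0 W = card {i. i \<le> d \<and> Estar_img R u0 i W \<noteq> {0}} - 1"

definition thin_module :: "nat \<Rightarrow> (nat \<Rightarrow> ('a::finite \<times> 'a) set) \<Rightarrow> 'a \<Rightarrow> ('a \<Rightarrow> complex) set \<Rightarrow> bool" where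
  "thin_module d R u0 W \<longleftrightarrow>
     (\<forall>i\<le>d. vector_space.dim (fscale :: complex \<Rightarrow> _) (Estar_img R u0 i W) \<le> 1)"

(* the p x p matrix with (i,h) entry prod_{s=1}^h c_{r_i - e + p - s}; rows i = 1..p stored at index i-1 *)
definition c_matrix :: "(nat \<Rightarrow> ('a::finite \<times> 'a) set) \<Rightarrow> nat \<Rightarrow> nat \<Rightarrow> (nat \<Rightarrow> nat) \<Rightarrow> real mat" where
  "c_matrix R p e r = mat p p (\<lambda>(i, h). \<Prod>s = 1..h. real (c_num R (r (i + 1) - e + p - s)))"

end

theory Submission
  imports Defs
begin

interpretation fvs: vector_space "fscale :: 'k::field \<Rightarrow> ('b \<Rightarrow> 'k) \<Rightarrow> ('b \<Rightarrow> 'k)"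
  by unfold_locales (auto simp: fscale_def algebra_simps fun_eq_iff)

definition ind :: "'b \<Rightarrow> 'b \<Rightarrow> 'k::field" where "ind a = (\<lambda>x. if x = a then 1 else 0)"

lemma sum_fun_apply: "(\<Sum>i\<in>A. f i) x = (\<Sum>i\<in>A. f i x)"
  by (induction A rule: infinite_finite_induct) auto

lemma fscale_apply: "fscale c f x = c * f x" by (simp add: fscale_def)

lemma fun_expand_ind: "(f :: 'b::finite \<Rightarrow> 'k::field) = (\<Sum>a\<in>UNIV. fscale (f a) (ind a))"
proof (rule ext)
  fix x
  have "(\<Sum>a\<in>UNIV. f a * (if x = a then 1 else 0)) = (\<Sum>a\<in>UNIV. if a = x then f a else 0)"
    by (rule sum.cong) auto
  then show "f x = (\<Sum>a\<in>UNIV. fscale (f a) (ind a)) x"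
    by (simp add: sum_fun_apply ind_def fscale_apply)
qed

lemma ind_inj: "inj (ind :: 'b \<Rightarrow> 'b \<Rightarrow> 'k::field)"
  by (rule injI) (metis ind_def one_neq_zero)

lemma ind_independent: "fvs.independent (range (ind :: 'b \<Rightarrow> 'b \<Rightarrow> 'k::field))"
  unfolding fvs.dependent_def
proof clarsimp
  fix a :: 'b
  assume a: "(ind a :: 'b \<Rightarrow> 'k) \<in> fvs.span (range ind - {ind a})"
  have "fvs.span (range ind - {ind a}) \<subseteq> {f :: 'b \<Rightarrow> 'k. f a = 0}"
  proof (rule fvs.span_minimal)
    show "range ind - {ind a} \<subseteq> {f :: 'b \<Rightarrow> 'k. f a = 0}"
      by (auto simp: ind_def)
    show "fvs.subspace {f :: 'b \<Rightarrow> 'k. f a = 0}"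
      by (auto simp: fvs.subspace_def fscale_apply)
  qed
  with a show False by (auto simp: ind_def)
qed

lemma ind_span: "fvs.span (range (ind :: 'b::finite \<Rightarrow> 'b \<Rightarrow> 'k::field)) = UNIV"
proof -
  have "f \<in> fvs.span (range ind)" for f :: "'b \<Rightarrow> 'k"
    by (subst fun_expand_ind) (intro fvs.span_sum fvs.span_scale fvs.span_base, auto)
  then show ?thesis by auto
qed

interpretation ffd: finite_dimensional_vector_space "fscale :: 'k::field \<Rightarrow> ('b::finite \<Rightarrow> 'k) \<Rightarrow> ('b \<Rightarrow> 'k)"
   "range ind"
  by unfold_locales (auto simp: ind_independent ind_span)

lemma dim_support:
  "fvs.dim {f :: 'b::finite \<Rightarrow> 'k::field. \<forall>x. x \<notin> A \<longrightarrow> f x = 0} = card A"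
proof -
  have "fvs.dim {f :: 'b::finite \<Rightarrow> 'k::field. \<forall>x. x \<notin> A \<longrightarrow> f x = 0} = card (ind ` A :: ('b \<Rightarrow> 'k) set)"
  proof (rule fvs.dim_unique)
    show "ind ` A \<subseteq> {f :: 'b::finite \<Rightarrow> 'k::field. \<forall>x. x \<notin> A \<longrightarrow> f x = 0}"
      by (auto simp: ind_def)
    show "fvs.independent (ind ` A :: ('b \<Rightarrow> 'k) set)"
      by (rule fvs.independent_mono[OF ind_independent]) auto
    show "card (ind ` A :: ('b \<Rightarrow> 'k) set) = card (ind ` A :: ('b \<Rightarrow> 'k) set)" ..
    show "{f :: 'b::finite \<Rightarrow> 'k::field. \<forall>x. x \<notin> A \<longrightarrow> f x = 0} \<subseteq> fvs.span (ind ` A)"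
    proof
      fix f :: "'b \<Rightarrow> 'k" assume "f \<in> {f. \<forall>x. x \<notin> A \<longrightarrow> f x = 0}"
      then have f0: "\<And>x. x \<notin> A \<Longrightarrow> f x = 0" by auto
      have "f = (\<Sum>a\<in>UNIV. fscale (f a) (ind a))" by (rule fun_expand_ind)
      also have "\<dots> = (\<Sum>a\<in>A. fscale (f a) (ind a))"
        by (rule sum.mono_neutral_right) (auto simp: f0 fscale_def fun_eq_iff)
      finally show "f \<in> fvs.span (ind ` A)"
        by (metis (no_types, lifting) fvs.span_base fvs.span_scale fvs.span_sum image_eqI)
    qed
  qed
  also have "\<dots> = card A" by (rule card_image) (rule inj_on_subset[OF ind_inj], auto)
  finally show ?thesis .
qed

lemma dim_UNIV_fun: "fvs.dim (UNIV :: ('b::finite \<Rightarrow> 'k::field) set) = card (UNIV :: 'b set)"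
  using dim_support[where A = "UNIV :: 'b set", where 'k = 'k] by simp

lemma dimension_eq: "ffd.dimension TYPE('b::finite) TYPE('k::field) = card (UNIV :: 'b set)"
  using dim_UNIV_fun[where 'b='b and 'k='k] by (simp add: ffd.dimension_def)

definition ip :: "('b::finite \<Rightarrow> complex) \<Rightarrow> ('b \<Rightarrow> complex) \<Rightarrow> complex" where
  "ip v w = (\<Sum>x\<in>UNIV. v x * cnj (w x))"

lemma ip_add1: "ip (v + v') w = ip v w + ip v' w"
  by (simp add: ip_def algebra_simps sum.distrib)
lemma ip_scale1: "ip (fscale c v) w = c * ip v w"
  by (simp add: ip_def algebra_simps sum_distrib_left fscale_apply)
lemma ip_diff1: "ip (v - v') w = ip v w - ip v' w"
  by (simp add: ip_def algebra_simps sum_subtractf)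
lemma ip_add2: "ip v (w + w') = ip v w + ip v w'"
  by (simp add: ip_def algebra_simps sum.distrib)
lemma ip_scale2: "ip v (fscale c w) = cnj c * ip v w"
  by (simp add: ip_def algebra_simps sum_distrib_left fscale_apply)
lemma ip_zero2: "ip v 0 = 0" by (simp add: ip_def)

lemma ip_self_zero: "ip v v = 0 \<Longrightarrow> v = 0"
proof -
  assume h: "ip v v = 0"
  have eq: "ip v v = complex_of_real (\<Sum>x\<in>UNIV. (cmod (v x))^2)"
    unfolding ip_def of_real_sum by (rule sum.cong) (simp_all only: complex_norm_square)
  have s0: "(\<Sum>x\<in>UNIV. (cmod (v x))^2) = 0"
    using h unfolding eq of_real_eq_0_iff .
  have "\<forall>x\<in>UNIV. (cmod (v x))^2 = 0"
    using sum_nonneg_eq_0_iff[of UNIV "\<lambda>x. (cmod (v x))^2"] s0 by simp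
  then show "v = 0" by (simp add: fun_eq_iff)
qed

lemma ip_zero1: "ip 0 w = 0" by (simp add: ip_def)

definition hyp :: "('b::finite \<Rightarrow> complex) \<Rightarrow> ('b \<Rightarrow> complex) set" where
  "hyp b = {v. ip v b = 0}"

lemma subspace_hyp: "fvs.subspace (hyp b)"
  by (auto simp: fvs.subspace_def hyp_def ip_add1 ip_scale1 ip_zero1)

lemma dim_hyp_cut:
  fixes S :: "('b::finite \<Rightarrow> complex) set"
  assumes S: "fvs.subspace S"
  shows "fvs.dim S \<le> fvs.dim (S \<inter> hyp b) + 1"
proof (cases "S \<subseteq> hyp b")
  case True then show ?thesis by (simp add: Int_absorb2)
next
  case False
  then obtain s where s: "s \<in> S" "ip s b \<noteq> 0" by (auto simp: hyp_def)
  have "S \<subseteq> fvs.span (insert s (S \<inter> hyp b))"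
  proof
    fix v assume v: "v \<in> S"
    define l where "l = ip v b / ip s b"
    have "v - fscale l s \<in> S"
      using S v s by (simp add: fvs.subspace_diff fvs.subspace_scale)
    moreover have "ip (v - fscale l s) b = 0"
      using s by (simp add: ip_diff1 ip_scale1 l_def)
    ultimately have a: "v - fscale l s \<in> fvs.span (insert s (S \<inter> hyp b))"
      by (intro fvs.span_base) (auto simp: hyp_def)
    have b: "fscale l s \<in> fvs.span (insert s (S \<inter> hyp b))"
      by (intro fvs.span_scale fvs.span_base) auto
    have "v = (v - fscale l s) + fscale l s" by simp
    then show "v \<in> fvs.span (insert s (S \<inter> hyp b))"
      using fvs.span_add[OF a b] by metis
  qed
  then have "fvs.dim S \<le> fvs.dim (insert s (S \<inter> hyp b))" by (rule ffd.dim_mono)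
  also have "\<dots> \<le> fvs.dim (S \<inter> hyp b) + 1" by (simp add: ffd.dim_insert)
  finally show ?thesis .
qed

lemma dim_hyps:
  fixes B :: "('b::finite \<Rightarrow> complex) set"
  assumes "finite B"
  shows "card (UNIV :: 'b set) \<le> fvs.dim {v. \<forall>b\<in>B. ip v b = 0} + card B"
  using assms
proof (induction B rule: finite_induct)
  case empty
  then show ?case using dim_UNIV_fun[where 'b='b and 'k=complex] by simp
next
  case (insert b B)
  have eq: "{v. \<forall>b'\<in>insert b B. ip v b' = 0} = {v. \<forall>b\<in>B. ip v b = 0} \<inter> hyp b"
    by (auto simp: hyp_def)
  have sub: "fvs.subspace {v :: 'b \<Rightarrow> complex. \<forall>b\<in>B. ip v b = 0}"
    by (auto simp: fvs.subspace_def ip_add1 ip_scale1 ip_zero1)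
  show ?case unfolding eq using insert dim_hyp_cut[OF sub, of b] by simp
qed

definition perp :: "('b::finite \<Rightarrow> complex) set \<Rightarrow> ('b \<Rightarrow> complex) set" where
  "perp W = {v. \<forall>w\<in>W. ip v w = 0}"

lemma subspace_perp: "fvs.subspace (perp W)"
  by (auto simp: fvs.subspace_def perp_def ip_add1 ip_scale1 ip_zero1)

lemma ortho_decomp:
  fixes W :: "('b::finite \<Rightarrow> complex) set"
  assumes W: "fvs.subspace W"
  shows "\<exists>w\<in>W. \<exists>u\<in>perp W. v = w + u"
proof -
  obtain B where B: "finite B" "B \<subseteq> W" "fvs.independent B" "fvs.span B = W" "card B = fvs.dim W"
    using ffd.basis_subspace_exists[OF W] by metis
  have pe: "perp W = {v. \<forall>b\<in>B. ip v b = 0}"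
  proof
    show "perp W \<subseteq> {v. \<forall>b\<in>B. ip v b = 0}" using B(2) by (auto simp: perp_def)
    show "{v. \<forall>b\<in>B. ip v b = 0} \<subseteq> perp W"
    proof
      fix v assume v: "v \<in> {v. \<forall>b\<in>B. ip v b = 0}"
      have "fvs.span B \<subseteq> {w. ip v w = 0}"
        by (rule fvs.span_minimal) (use v in \<open>auto simp: fvs.subspace_def ip_add2 ip_scale2 ip_zero2\<close>)
      then show "v \<in> perp W" using B(4) by (auto simp: perp_def)
    qed
  qed
  have d1: "card (UNIV :: 'b set) \<le> fvs.dim (perp W) + fvs.dim W"
    using dim_hyps[OF B(1)] B(5) pe by simp
  have int0: "W \<inter> perp W \<subseteq> {0}"
    using ip_self_zero by (auto simp: perp_def)
  have "fvs.dim {x + y |x y. x \<in> W \<and> y \<in> perp W} + fvs.dim (W \<inter> perp W) = fvs.dim W + fvs.dim (perp W)"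
    by (rule ffd.dim_sums_Int[OF W subspace_perp])
  then have "fvs.dim {x + y |x y. x \<in> W \<and> y \<in> perp W} \<ge> card (UNIV :: 'b set)"
  proof -
    have "fvs.dim (W \<inter> perp W) = 0" using int0 by simp
    then show ?thesis using d1 \<open>fvs.dim {x + y |x y. x \<in> W \<and> y \<in> perp W} + fvs.dim (W \<inter> perp W) = fvs.dim W + fvs.dim (perp W)\<close> by linarith
  qed
  moreover have "fvs.dim {x + y |x y. x \<in> W \<and> y \<in> perp W} \<le> card (UNIV :: 'b set)"
    using ffd.dim_subset_UNIV[of "{x + y |x y. x \<in> W \<and> y \<in> perp W}"] dimension_eq[where 'b='b and 'k=complex]
    by simp
  ultimately have "fvs.dim {x + y |x y. x \<in> W \<and> y \<in> perp W} = ffd.dimension TYPE('b) TYPE(complex)"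
    using dimension_eq[where 'b='b and 'k=complex] by simp
  then have sp: "fvs.span {x + y |x y. x \<in> W \<and> y \<in> perp W} = UNIV"
    by (simp only: ffd.dim_eq_full)
  have "fvs.subspace {x + y |x y. x \<in> W \<and> y \<in> perp W}"
    by (rule fvs.subspace_sums[OF W subspace_perp])
  then have "fvs.span {x + y |x y. x \<in> W \<and> y \<in> perp W} = {x + y |x y. x \<in> W \<and> y \<in> perp W}"
    by (simp only: fvs.span_eq_iff)
  then have "v \<in> {x + y |x y. x \<in> W \<and> y \<in> perp W}"
    using sp by simp
  then show ?thesis by blast
qed

lemma family_inj:
  fixes f :: "nat \<Rightarrow> ('b \<Rightarrow> 'k::field)"
  assumes fin: "finite I" and ind: "\<And>c. (\<Sum>j\<in>I. fscale (c j) (f j)) = 0 \<Longrightarrow> \<forall>j\<in>I. c j = 0"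
  shows "inj_on f I"
proof (rule inj_onI, rule ccontr)
  fix i j assume ij: "i \<in> I" "j \<in> I" "f i = f j" "i \<noteq> j"
  define c where "c k = (if k = i then 1 else if k = j then -1 else (0::'k))" for k
  have "(\<Sum>k\<in>I. fscale (c k) (f k)) = (\<Sum>k\<in>{i,j}. fscale (c k) (f k))"
    by (rule sum.mono_neutral_right) (use fin ij in \<open>auto simp: c_def fscale_def fun_eq_iff\<close>)
  also have "\<dots> = 0" using ij by (simp add: c_def fscale_def fun_eq_iff)
  finally have "\<forall>k\<in>I. c k = 0" by (rule ind)
  then show False using ij by (auto simp: c_def)
qed

lemma family_indep:
  fixes f :: "nat \<Rightarrow> ('b::finite \<Rightarrow> 'k::field)"
  assumes fin: "finite I" and ind: "\<And>c. (\<Sum>j\<in>I. fscale (c j) (f j)) = 0 \<Longrightarrow> \<forall>j\<in>I. c j = 0"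
  shows "fvs.independent (f ` I) \<and> card (f ` I) = card I"
proof
  have inj: "inj_on f I" by (rule family_inj[OF fin ind])
  then show "card (f ` I) = card I" by (rule card_image)
  show "fvs.independent (f ` I)"
    unfolding ffd.independent_explicit
  proof (intro conjI allI impI ballI)
    show "finite (f ` I)" using fin by simp
    fix c v assume h: "(\<Sum>v\<in>f ` I. fscale (c v) v) = 0" and v: "v \<in> f ` I"
    have "(\<Sum>j\<in>I. fscale ((c \<circ> f) j) (f j)) = 0"
      using h by (simp add: sum.reindex[OF inj])
    then have "\<forall>j\<in>I. (c \<circ> f) j = 0" by (rule ind)
    then show "c v = 0" using v by auto
  qed
qed

definition cx :: "('b \<Rightarrow> real) \<Rightarrow> ('b \<Rightarrow> complex)" where
  "cx g = (\<lambda>x. complex_of_real (g x))"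

lemma cx_inj: "inj cx"
  by (rule injI) (auto simp: cx_def fun_eq_iff)

lemma cx_sum: "cx (\<Sum>b\<in>B. fscale (u b) b) = (\<Sum>b\<in>B. fscale (complex_of_real (u b)) (cx b))"
  by (rule ext) (simp add: cx_def sum_fun_apply fscale_apply)

lemma dim_complexify:
  fixes G :: "('b::finite \<Rightarrow> real) set"
  shows "fvs.dim (fvs.span G) = fvs.dim (fvs.span (cx ` G))"
proof -
  obtain B where B: "B \<subseteq> G" "fvs.independent B" "G \<subseteq> fvs.span B" "card B = fvs.dim G"
    using fvs.basis_exists by metis
  have finB: "finite B" using B(2) ffd.finiteI_independent by blast
  have "fvs.dim (cx ` G) = card (cx ` B)"
  proof (rule fvs.dim_unique)
    show "cx ` B \<subseteq> cx ` G" using B(1) by auto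
    show "cx ` G \<subseteq> fvs.span (cx ` B)"
    proof
      fix h assume "h \<in> cx ` G"
      then obtain g where g: "g \<in> G" "h = cx g" by auto
      then have "g \<in> fvs.span B" using B(3) by auto
      then obtain u where u: "g = (\<Sum>b\<in>B. fscale (u b) b)"
        using fvs.span_finite[OF finB] by auto
      have "h = (\<Sum>b\<in>B. fscale (complex_of_real (u b)) (cx b))" using g u cx_sum by simp
      also have "\<dots> \<in> fvs.span (cx ` B)"
        by (intro fvs.span_sum fvs.span_scale fvs.span_base) auto
      finally show "h \<in> fvs.span (cx ` B)" .
    qed
    show "fvs.independent (cx ` B)"
      unfolding ffd.independent_explicit
    proof (intro conjI allI impI ballI)
      show "finite (cx ` B)" using finB by simp
      fix c v assume h: "(\<Sum>v\<in>cx ` B. fscale (c v) v) = 0" and v: "v \<in> cx ` B"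
      have inj: "inj_on cx B" using cx_inj by (rule inj_on_subset) auto
      have h2: "(\<Sum>b\<in>B. fscale (c (cx b)) (cx b)) = 0"
        using h by (simp add: sum.reindex[OF inj])
      have re: "(\<Sum>b\<in>B. fscale (Re (c (cx b))) b) = 0"
      proof (rule ext)
        fix x
        have "Re ((\<Sum>b\<in>B. fscale (c (cx b)) (cx b)) x) = 0" using h2 by simp
        then show "(\<Sum>b\<in>B. fscale (Re (c (cx b))) b) x = 0 x"
          by (simp add: sum_fun_apply fscale_apply cx_def Re_sum)
      qed
      have im: "(\<Sum>b\<in>B. fscale (Im (c (cx b))) b) = 0"
      proof (rule ext)
        fix x
        have "Im ((\<Sum>b\<in>B. fscale (c (cx b)) (cx b)) x) = 0" using h2 by simp
        then show "(\<Sum>b\<in>B. fscale (Im (c (cx b))) b) x = 0 x"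
          by (simp add: sum_fun_apply fscale_apply cx_def Im_sum)
      qed
      from v obtain b where b: "b \<in> B" "v = cx b" by auto
      have ie: "\<And>c'. (\<Sum>v\<in>B. fscale (c' v) v) = 0 \<Longrightarrow> \<forall>v\<in>B. c' v = 0"
        using B(2) ffd.independent_explicit by blast
      have "Re (c (cx b)) = 0"
        using ie[OF re] b(1) by blast
      moreover have "Im (c (cx b)) = 0"
        using ie[OF im] b(1) by blast
      ultimately show "c v = 0" using b by (simp add: complex_eq_iff)
    qed
  qed simp
  also have "\<dots> = card B" by (rule card_image) (rule inj_on_subset[OF cx_inj], auto)
  finally show ?thesis using B(4) by simp
qed

locale psch =
  fixes d :: nat and R :: "nat \<Rightarrow> ('a::finite \<times> 'a) set"
  assumes scheme: "P_polynomial_scheme d R"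
begin

lemma sas: "symmetric_assoc_scheme d R" using scheme by (simp add: P_polynomial_scheme_def)

lemma R0: "R 0 = Id" using sas by (simp add: symmetric_assoc_scheme_def)
lemma Rne: "i \<le> d \<Longrightarrow> R i \<noteq> {}" using sas by (simp add: symmetric_assoc_scheme_def)
lemma Runiq: "\<exists>!i. i \<le> d \<and> (x, y) \<in> R i" using sas by (simp add: symmetric_assoc_scheme_def)
lemma Rsym: "i \<le> d \<Longrightarrow> (x, y) \<in> R i \<Longrightarrow> (y, x) \<in> R i" using sas by (simp add: symmetric_assoc_scheme_def)
lemma Rconst: "h \<le> d \<Longrightarrow> i \<le> d \<Longrightarrow> j \<le> d \<Longrightarrow> \<exists>n::nat. \<forall>x y. (x, y) \<in> R h \<longrightarrow>
         card {z. (x, z) \<in> R i \<and> (z, y) \<in> R j} = n"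
  using sas unfolding symmetric_assoc_scheme_def by blast
lemma Rgraph: "i \<le> d \<Longrightarrow> (x, y) \<in> R i \<longleftrightarrow> graph_dist_is (R 1) i x y"
  using scheme by (simp add: P_polynomial_scheme_def)

definition dist :: "'a \<Rightarrow> 'a \<Rightarrow> nat" where
  "dist x y = (THE i. i \<le> d \<and> (x, y) \<in> R i)"

lemma dist_prop: "dist x y \<le> d \<and> (x, y) \<in> R (dist x y)"
  unfolding dist_def by (rule theI'[OF Runiq])

lemma dist_le: "dist x y \<le> d" using dist_prop by blast
lemma in_R_dist: "(x, y) \<in> R (dist x y)" using dist_prop by blast

lemma R_iff: "i \<le> d \<Longrightarrow> (x, y) \<in> R i \<longleftrightarrow> dist x y = i"
  using Runiq[of x y] dist_prop[of x y] by blast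

lemma dist_sym: "dist x y = dist y x"
proof -
  have "(y, x) \<in> R (dist x y)" using Rsym dist_prop by blast
  then show ?thesis using R_iff[OF dist_le[of x y]] by simp
qed

lemma dist_0: "dist x y = 0 \<longleftrightarrow> x = y"
  using R_iff[of 0 x y] R0 by auto

lemma dist_self[simp]: "dist x x = 0" by (simp add: dist_0)

lemma relpow_dist: "(x, y) \<in> R 1 ^^ k \<Longrightarrow> dist x y \<le> k"
proof (rule ccontr)
  assume a: "(x, y) \<in> R 1 ^^ k" "\<not> dist x y \<le> k"
  have "graph_dist_is (R 1) (dist x y) x y" using Rgraph dist_prop by blast
  then show False using a by (auto simp: graph_dist_is_def)
qed

lemma dist_relpow: "(x, y) \<in> R 1 ^^ dist x y"
proof -
  have "graph_dist_is (R 1) (dist x y) x y" using Rgraph dist_prop by blast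
  then show ?thesis by (simp add: graph_dist_is_def)
qed

lemma triangle: "dist x z \<le> dist x y + dist y z"
proof -
  have "(x, z) \<in> R 1 ^^ (dist x y + dist y z)"
    using dist_relpow[of x y] dist_relpow[of y z] by (auto simp: relpow_add)
  then show ?thesis by (rule relpow_dist)
qed

lemma adj_dist: "(x, y) \<in> R 1 \<Longrightarrow> dist x y \<le> 1"
  by (rule relpow_dist) simp

lemma adj_iff: "1 \<le> d \<Longrightarrow> (x, y) \<in> R 1 \<longleftrightarrow> dist x y = 1"
  using R_iff by simp

definition pn :: "nat \<Rightarrow> nat \<Rightarrow> nat \<Rightarrow> nat" where "pn = int_num R"

lemma pn_card:
  assumes "h \<le> d" "i \<le> d" "j \<le> d" "(x, y) \<in> R h"
  shows "card {z. (x, z) \<in> R i \<and> (z, y) \<in> R j} = pn h i j"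
proof -
  obtain n where n: "\<forall>x y. (x, y) \<in> R h \<longrightarrow> card {z. (x, z) \<in> R i \<and> (z, y) \<in> R j} = n"
    using Rconst assms(1-3) by blast
  have "(SOME p. p \<in> R h) \<in> R h" using Rne[OF assms(1)] by (simp add: some_in_eq)
  then have "pn h i j = n" using n
    by (auto simp: pn_def int_num_def split: prod.splits)
  then show ?thesis using n assms(4) by simp
qed

lemma c_card:
  assumes "1 \<le> k" "k \<le> d" "dist x y = k"
  shows "card {z. dist x z = 1 \<and> dist z y = k - 1} = c_num R k"
proof -
  have "{z. dist x z = 1 \<and> dist z y = k - 1} = {z. (x, z) \<in> R 1 \<and> (z, y) \<in> R (k - 1)}"
    using assms R_iff by auto
  also have "card \<dots> = pn k 1 (k - 1)"
    using assms by (intro pn_card) (auto simp: R_iff)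
  finally show ?thesis by (simp add: pn_def c_num_def)
qed

lemma c_pos:
  assumes "1 \<le> k" "k \<le> d"
  shows "c_num R k \<ge> 1"
proof -
  obtain x y where xy: "(x, y) \<in> R k" using Rne[OF assms(2)] by auto
  then have dk: "dist x y = k" using R_iff assms by auto
  have kk: "Suc (k - 1) = k" using assms by simp
  have "(x, y) \<in> R 1 ^^ Suc (k - 1)" unfolding kk using dist_relpow[of x y] dk by simp
  then obtain z where z: "(x, z) \<in> R 1" "(z, y) \<in> R 1 ^^ (k - 1)"
    by (rule relpow_Suc_E2)
  have "dist z y \<le> k - 1" using z(2) relpow_dist by blast
  moreover have "dist x y \<le> dist x z + dist z y" by (rule triangle)
  moreover have "dist x z \<le> 1" using z(1) adj_dist by blast
  ultimately have "dist z y = k - 1" "dist x z = 1" using dk assms(1) by linarith+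
  then have "z \<in> {z. dist x z = 1 \<and> dist z y = k - 1}" by simp
  then have "card {z. dist x z = 1 \<and> dist z y = k - 1} > 0"
    by (subst card_gt_0_iff) auto
  then show ?thesis using c_card[OF assms dk] by linarith
qed

end

lemma sum_if_card: "(\<Sum>z\<in>(UNIV::'a::finite set). if P z then (c::complex) else 0) = of_nat (card {z. P z}) * c"
proof -
  have "(\<Sum>z\<in>(UNIV::'a set). if P z then c else 0) = (\<Sum>z\<in>{z. P z}. c)"
    by (rule sum.mono_neutral_cong_right) auto
  then show ?thesis by simp
qed

lemma cmat_apply_add: "cmat_apply M (v + w) = cmat_apply M v + cmat_apply M w"
  by (rule ext) (simp add: cmat_apply_def algebra_simps sum.distrib)
lemma cmat_apply_scale: "cmat_apply M (fscale c v) = fscale c (cmat_apply M v)"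
  by (rule ext) (simp add: cmat_apply_def algebra_simps sum_distrib_left fscale_apply)
lemma cmat_apply_zero: "cmat_apply M 0 = 0"
  by (rule ext) (simp add: cmat_apply_def)
lemma cmat_apply_diff: "cmat_apply M (v - w) = cmat_apply M v - cmat_apply M w"
  by (rule ext) (simp add: cmat_apply_def algebra_simps sum_subtractf)
lemma cmat_apply_madd: "cmat_apply (\<lambda>x y. M x y + N x y) v = cmat_apply M v + cmat_apply N v"
  by (rule ext) (simp add: cmat_apply_def algebra_simps sum.distrib)
lemma cmat_apply_msc: "cmat_apply (\<lambda>x y. c * M x y) v = fscale c (cmat_apply M v)"
  by (rule ext) (simp add: cmat_apply_def algebra_simps sum_distrib_left fscale_apply)
lemma cmat_apply_mult: "cmat_apply (cmat_mult M N) (v :: 'a::finite \<Rightarrow> complex) = cmat_apply M (cmat_apply N v)"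
proof (rule ext)
  fix x
  have "cmat_apply (cmat_mult M N) v x = (\<Sum>y\<in>UNIV. \<Sum>z\<in>UNIV. M x z * N z y * v y)"
    by (simp add: cmat_apply_def cmat_mult_def sum_distrib_right)
  also have "\<dots> = (\<Sum>z\<in>UNIV. \<Sum>y\<in>UNIV. M x z * N z y * v y)" by (rule sum.swap)
  also have "\<dots> = cmat_apply M (cmat_apply N v) x"
    by (simp add: cmat_apply_def sum_distrib_left mult.assoc)
  finally show "cmat_apply (cmat_mult M N) v x = cmat_apply M (cmat_apply N v) x" .
qed

lemma cmat_apply_sum: "cmat_apply M (\<Sum>i\<in>I. f i) = (\<Sum>i\<in>I. cmat_apply M (f i))"
proof (induction I rule: infinite_finite_induct)
  case (infinite A) then show ?case by (simp only: sum.infinite[OF infinite] cmat_apply_zero)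
next
  case empty then show ?case by (simp only: sum.empty cmat_apply_zero)
next
  case (insert x F) then show ?case by (simp only: sum.insert[OF insert(1,2)] cmat_apply_add)
qed

locale pst = psch d R for d :: nat and R :: "nat \<Rightarrow> ('a::finite \<times> 'a) set" +
  fixes u0 :: 'a
begin

abbreviation Aop :: "nat \<Rightarrow> ('a \<Rightarrow> complex) \<Rightarrow> ('a \<Rightarrow> complex)" where
  "Aop h v \<equiv> cmat_apply (adj_mat R h) v"
abbreviation Eop :: "nat \<Rightarrow> ('a \<Rightarrow> complex) \<Rightarrow> ('a \<Rightarrow> complex)" where
  "Eop l v \<equiv> cmat_apply (dual_idem R u0 l) v"

lemma Aop_apply: "h \<le> d \<Longrightarrow> Aop h v x = (\<Sum>y\<in>UNIV. if dist x y = h then v y else 0)"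
  unfolding cmat_apply_def adj_mat_def by (intro sum.cong) (auto simp: R_iff)

lemma Eop_apply: "l \<le> d \<Longrightarrow> Eop l v x = (if dist u0 x = l then v x else 0)"
proof -
  assume l: "l \<le> d"
  have "Eop l v x = (\<Sum>y\<in>UNIV. if y = x then (if dist u0 x = l then v x else 0) else 0)"
    unfolding cmat_apply_def dual_idem_def using R_iff[OF l] by (intro sum.cong) auto
  also have "\<dots> = (if dist u0 x = l then v x else 0)" by simp
  finally show ?thesis .
qed

lemma A0: "Aop 0 v = v"
proof (rule ext)
  fix x
  have "Aop 0 v x = (\<Sum>y\<in>UNIV. if y = x then v y else 0)"
    unfolding Aop_apply[OF le0] by (intro sum.cong) (auto simp: dist_0)
  then show "Aop 0 v x = v x" by simp
qed

lemma EE: "l \<le> d \<Longrightarrow> m \<le> d \<Longrightarrow> Eop l (Eop m v) = (if l = m then Eop m v else 0)"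
  by (rule ext) (auto simp: Eop_apply)

lemma card_A1Ah:
  assumes h1: "1 \<le> h" and hd: "h + 1 \<le> d"
  shows "of_nat (card {z. dist x z = 1 \<and> dist z y = h}) =
    (if dist x y = h + 1 then of_nat (pn (h + 1) 1 h) else 0) +
    (if dist x y = h then of_nat (pn h 1 h) else 0) +
    (if dist x y = h - 1 then of_nat (pn (h - 1) 1 h) else (0::complex))"
proof -
  have eqs: "{z. dist x z = 1 \<and> dist z y = h} = {z. (x, z) \<in> R 1 \<and> (z, y) \<in> R h}"
    using hd h1 R_iff by auto
  consider "dist x y = h + 1" | "dist x y = h" | "dist x y = h - 1" | "dist x y \<noteq> h + 1 \<and> dist x y \<noteq> h \<and> dist x y \<noteq> h - 1"
    by blast
  then show ?thesis
  proof cases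
    case 1
    have "card {z. (x, z) \<in> R 1 \<and> (z, y) \<in> R h} = pn (h + 1) 1 h"
      using 1 hd h1 by (intro pn_card) (auto simp: R_iff)
    then show ?thesis using 1 h1 eqs by simp
  next
    case 2
    have "card {z. (x, z) \<in> R 1 \<and> (z, y) \<in> R h} = pn h 1 h"
      using 2 hd h1 by (intro pn_card) (auto simp: R_iff)
    then show ?thesis using 2 h1 eqs by simp
  next
    case 3
    have "card {z. (x, z) \<in> R 1 \<and> (z, y) \<in> R h} = pn (h - 1) 1 h"
      using 3 hd h1 by (intro pn_card) (auto simp: R_iff)
    moreover have "h - 1 \<noteq> h + 1" "h - 1 \<noteq> h" using h1 by linarith+
    ultimately show ?thesis using 3 eqs by simp
  next
    case 4
    have "{z. dist x z = 1 \<and> dist z y = h} = {}"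
    proof (rule ccontr)
      assume "{z. dist x z = 1 \<and> dist z y = h} \<noteq> {}"
      then obtain z where z: "dist x z = 1" "dist z y = h" by auto
      have "dist x y \<le> dist x z + dist z y" by (rule triangle)
      moreover have "dist z y \<le> dist z x + dist x y" by (rule triangle)
      ultimately show False using 4 z dist_sym[of z x] by linarith
    qed
    then show ?thesis using 4 by simp
  qed
qed

lemma recurrence:
  assumes h1: "1 \<le> h" and hd: "h + 1 \<le> d"
  shows "Aop 1 (Aop h v) = fscale (of_nat (pn (h + 1) 1 h)) (Aop (h + 1) v)
     + fscale (of_nat (pn h 1 h)) (Aop h v) + fscale (of_nat (pn (h - 1) 1 h)) (Aop (h - 1) v)"
proof (rule ext)
  fix x
  have d1: "1 \<le> d" and dh: "h \<le> d" and dh1: "h + 1 \<le> d" and dhm: "h - 1 \<le> d" using hd h1 by auto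
  have "Aop 1 (Aop h v) x = (\<Sum>z\<in>UNIV. if dist x z = 1 then (\<Sum>y\<in>UNIV. if dist z y = h then v y else 0) else 0)"
    unfolding Aop_apply[OF d1] Aop_apply[OF dh] ..
  also have "\<dots> = (\<Sum>z\<in>UNIV. \<Sum>y\<in>UNIV. if dist x z = 1 \<and> dist z y = h then v y else 0)"
    by (intro sum.cong) (auto simp: if_distrib)
  also have "\<dots> = (\<Sum>y\<in>UNIV. \<Sum>z\<in>UNIV. if dist x z = 1 \<and> dist z y = h then v y else 0)"
    by (rule sum.swap)
  also have "\<dots> = (\<Sum>y\<in>UNIV. of_nat (card {z. dist x z = 1 \<and> dist z y = h}) * v y)"
    by (intro sum.cong refl) (simp add: sum_if_card)
  also have "\<dots> = (\<Sum>y\<in>UNIV. of_nat (pn (h + 1) 1 h) * (if dist x y = h + 1 then v y else 0)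
      + of_nat (pn h 1 h) * (if dist x y = h then v y else 0)
      + of_nat (pn (h - 1) 1 h) * (if dist x y = h - 1 then v y else 0))"
  proof (intro sum.cong refl)
    fix y
    have neq: "h - 1 \<noteq> h + 1" "h - 1 \<noteq> h" "h \<noteq> h + 1" using h1 by linarith+
    show "of_nat (card {z. dist x z = 1 \<and> dist z y = h}) * v y = of_nat (pn (h + 1) 1 h) * (if dist x y = h + 1 then v y else 0)
      + of_nat (pn h 1 h) * (if dist x y = h then v y else 0)
      + of_nat (pn (h - 1) 1 h) * (if dist x y = h - 1 then v y else 0)"
      unfolding card_A1Ah[OF h1 hd] using neq by (auto simp: distrib_right)
  qed
  also have "\<dots> = (fscale (of_nat (pn (h + 1) 1 h)) (Aop (h + 1) v)
     + fscale (of_nat (pn h 1 h)) (Aop h v) + fscale (of_nat (pn (h - 1) 1 h)) (Aop (h - 1) v)) x"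
    unfolding plus_fun_def fscale_apply Aop_apply[OF dh] Aop_apply[OF dh1] Aop_apply[OF dhm]
    by (simp add: sum.distrib sum_distrib_left)
  finally show "Aop 1 (Aop h v) x = (fscale (of_nat (pn (h + 1) 1 h)) (Aop (h + 1) v)
     + fscale (of_nat (pn h 1 h)) (Aop h v) + fscale (of_nat (pn (h - 1) 1 h)) (Aop (h - 1) v)) x" .
qed

lemma pn_c: "pn (h + 1) 1 h = c_num R (h + 1)"
  by (simp add: pn_def c_num_def)

lemma A_closed:
  assumes U: "fvs.subspace U" and A1: "1 \<le> d \<Longrightarrow> \<forall>v\<in>U. Aop 1 v \<in> U"
  shows "h \<le> d \<Longrightarrow> v \<in> U \<Longrightarrow> Aop h v \<in> U"
proof (induction h arbitrary: v rule: less_induct)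
  case (less h)
  consider "h = 0" | "h = 1" | "h \<ge> 2" by linarith
  then show ?case
  proof cases
    case 1 then show ?thesis using less by (simp add: A0)
  next
    case 2 then show ?thesis using less A1 by auto
  next
    case 3
    define g where "g = h - 1"
    have g1: "1 \<le> g" and gd: "g + 1 \<le> d" and hg: "h = g + 1" using 3 less g_def by auto
    have IHg: "Aop g v \<in> U" using less hg by auto
    have IHg1: "Aop (g - 1) v \<in> U" using less hg by auto
    have AAg: "Aop 1 (Aop g v) \<in> U" using A1 IHg gd by auto
    define c where "c = (of_nat (pn (g + 1) 1 g) :: complex)"
    have "c_num R (g + 1) \<ge> 1" using c_pos[of "g + 1"] gd by simp
    then have "pn (g + 1) 1 g \<ge> 1" by (simp only: pn_c)
    then have c0: "c \<noteq> 0" by (simp add: c_def)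
    have rec: "Aop 1 (Aop g v) = fscale c (Aop (g + 1) v)
      + fscale (of_nat (pn g 1 g)) (Aop g v) + fscale (of_nat (pn (g - 1) 1 g)) (Aop (g - 1) v)"
      unfolding c_def by (rule recurrence[OF g1 gd])
    have "Aop (g + 1) v = fscale (1 / c) (Aop 1 (Aop g v) - fscale (of_nat (pn g 1 g)) (Aop g v)
       - fscale (of_nat (pn (g - 1) 1 g)) (Aop (g - 1) v))"
      unfolding rec using c0 by (simp add: fun_eq_iff fscale_apply)
    also have "\<dots> \<in> U"
      using U AAg IHg IHg1 by (intro fvs.subspace_scale fvs.subspace_diff) auto
    finally show ?thesis using hg by simp
  qed
qed

lemma T_module_gen:
  assumes U: "fvs.subspace U" and A1: "1 \<le> d \<Longrightarrow> \<forall>v\<in>U. Aop 1 v \<in> U"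
    and E: "\<And>l v. l \<le> d \<Longrightarrow> v \<in> U \<Longrightarrow> Eop l v \<in> U"
  shows "T_module d R u0 U"
  unfolding T_module_def
proof (intro conjI ballI)
  show "module.subspace fscale U" using U .
  fix M v assume M: "M \<in> terwilliger_alg d R u0" and v: "v \<in> U"
  from M v show "cmat_apply M v \<in> U"
  proof (induction arbitrary: v rule: terwilliger_alg.induct)
    case (gen_A i) then show ?case using A_closed[OF U A1] by blast
  next
    case (gen_E i) then show ?case using E by blast
  next
    case (add M N) then show ?case using U unfolding cmat_apply_madd by (metis fvs.subspace_add)
  next
    case (mult M N) then show ?case by (simp add: cmat_apply_mult)
  next
    case (smult M c) then show ?case using U unfolding cmat_apply_msc by (metis fvs.subspace_scale)
  qed
qed

end

context pst begin

lemma Tm_sub: "T_module d R u0 W \<Longrightarrow> fvs.subspace W"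
  by (simp add: T_module_def)
lemma Tm_A: "T_module d R u0 W \<Longrightarrow> h \<le> d \<Longrightarrow> w \<in> W \<Longrightarrow> Aop h w \<in> W"
  by (auto simp: T_module_def intro: terwilliger_alg.gen_A)
lemma Tm_E: "T_module d R u0 W \<Longrightarrow> l \<le> d \<Longrightarrow> w \<in> W \<Longrightarrow> Eop l w \<in> W"
  by (auto simp: T_module_def intro: terwilliger_alg.gen_E)

lemma Tm_Int: "T_module d R u0 U \<Longrightarrow> T_module d R u0 V \<Longrightarrow> T_module d R u0 (U \<inter> V)"
  by (auto simp: T_module_def fvs.subspace_def)

lemma ip_A: "h \<le> d \<Longrightarrow> ip (Aop h v) w = ip v (Aop h w)"
proof -
  assume h: "h \<le> d"
  have "ip (Aop h v) w = (\<Sum>x\<in>UNIV. (\<Sum>y\<in>UNIV. if dist x y = h then v y else 0) * cnj (w x))"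
    unfolding ip_def Aop_apply[OF h] ..
  also have "\<dots> = (\<Sum>x\<in>UNIV. \<Sum>y\<in>UNIV. if dist x y = h then v y * cnj (w x) else 0)"
    unfolding sum_distrib_right by (intro sum.cong refl) auto
  also have "\<dots> = (\<Sum>y\<in>UNIV. \<Sum>x\<in>UNIV. if dist x y = h then v y * cnj (w x) else 0)"
    by (rule sum.swap)
  also have "\<dots> = (\<Sum>y\<in>UNIV. v y * (\<Sum>x\<in>UNIV. if dist y x = h then cnj (w x) else 0))"
    unfolding sum_distrib_left by (intro sum.cong refl) (auto simp: dist_sym)
  also have "\<dots> = ip v (Aop h w)"
    unfolding ip_def Aop_apply[OF h] cnj_sum by (intro sum.cong refl) (auto intro!: sum.cong)
  finally show ?thesis .
qed

lemma ip_E: "l \<le> d \<Longrightarrow> ip (Eop l v) w = ip v (Eop l w)"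
  unfolding ip_def by (intro sum.cong) (auto simp: Eop_apply)

lemma Tm_perp:
  assumes W: "T_module d R u0 W"
  shows "T_module d R u0 (perp W)"
proof (rule T_module_gen)
  show "fvs.subspace (perp W)" by (rule subspace_perp)
  show "\<forall>v\<in>perp W. Aop 1 v \<in> perp W" if "1 \<le> d"
    using that Tm_A[OF W, of 1] by (auto simp: perp_def ip_A)
  show "Eop l v \<in> perp W" if "l \<le> d" "v \<in> perp W" for l v
    using that Tm_E[OF W, of l] by (auto simp: perp_def ip_E)
qed

lemma card_chain:
  assumes jr: "j \<le> r" and rd: "r + 1 \<le> d" and x: "dist u0 x = r + 1" and y: "dist u0 y = j"
  shows "card {z. dist x z = 1 \<and> dist u0 z = r \<and> dist z y = r - j}
       = (if dist x y = r + 1 - j then c_num R (r + 1 - j) else 0)"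
proof (cases "dist x y = r + 1 - j")
  case True
  have "{z. dist x z = 1 \<and> dist u0 z = r \<and> dist z y = r - j} = {z. dist x z = 1 \<and> dist z y = (r + 1 - j) - 1}"
  proof (intro equalityI subsetI)
    fix z assume "z \<in> {z. dist x z = 1 \<and> dist u0 z = r \<and> dist z y = r - j}"
    then show "z \<in> {z. dist x z = 1 \<and> dist z y = (r + 1 - j) - 1}" using jr by auto
  next
    fix z assume z: "z \<in> {z. dist x z = 1 \<and> dist z y = (r + 1 - j) - 1}"
    have "dist u0 z \<le> dist u0 y + dist y z" by (rule triangle)
    moreover have "dist u0 x \<le> dist u0 z + dist z x" by (rule triangle)
    ultimately show "z \<in> {z. dist x z = 1 \<and> dist u0 z = r \<and> dist z y = r - j}"
      using z x y jr dist_sym[of y z] dist_sym[of z x] by auto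
  qed
  also have "card \<dots> = c_num R (r + 1 - j)"
    using True jr rd by (intro c_card) auto
  finally show ?thesis using True by simp
next
  case False
  have "{z. dist x z = 1 \<and> dist u0 z = r \<and> dist z y = r - j} = {}"
  proof (rule ccontr)
    assume "{z. dist x z = 1 \<and> dist u0 z = r \<and> dist z y = r - j} \<noteq> {}"
    then obtain z where z: "dist x z = 1" "dist z y = r - j" by auto
    have "dist x y \<le> dist x z + dist z y" by (rule triangle)
    moreover have "dist u0 x \<le> dist u0 y + dist y x" by (rule triangle)
    ultimately show False using False z x y jr dist_sym[of y x] by linarith
  qed
  then show ?thesis using False by simp
qed

lemma chain:
  assumes jr: "j \<le> r" and rd: "r + 1 \<le> d"
  shows "Eop (r + 1) (Aop 1 (Eop r (Aop (r - j) (Eop j v))))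
       = fscale (of_nat (c_num R (r + 1 - j))) (Eop (r + 1) (Aop (r + 1 - j) (Eop j v)))"
proof (rule ext)
  fix x
  have d1: "1 \<le> d" and dr: "r \<le> d" and dj: "j \<le> d" and drj: "r - j \<le> d" and dr1: "r + 1 - j \<le> d"
    using jr rd by auto
  show "Eop (r + 1) (Aop 1 (Eop r (Aop (r - j) (Eop j v)))) x
       = fscale (of_nat (c_num R (r + 1 - j))) (Eop (r + 1) (Aop (r + 1 - j) (Eop j v))) x"
  proof (cases "dist u0 x = r + 1")
    case False
    then show ?thesis unfolding fscale_apply Eop_apply[OF rd] by simp
  next
    case True
    have "Eop (r + 1) (Aop 1 (Eop r (Aop (r - j) (Eop j v)))) x
       = (\<Sum>z\<in>UNIV. if dist x z = 1 then (if dist u0 z = r then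
            (\<Sum>y\<in>UNIV. if dist z y = r - j then (if dist u0 y = j then v y else 0) else 0) else 0) else 0)"
      unfolding Eop_apply[OF rd] Aop_apply[OF d1] Eop_apply[OF dr] Aop_apply[OF drj] Eop_apply[OF dj]
      using True by simp
    also have "\<dots> = (\<Sum>z\<in>UNIV. \<Sum>y\<in>UNIV. if dist x z = 1 \<and> dist u0 z = r \<and> dist z y = r - j then
        (if dist u0 y = j then v y else 0) else 0)"
      by (intro sum.cong) auto
    also have "\<dots> = (\<Sum>y\<in>UNIV. \<Sum>z\<in>UNIV. if dist x z = 1 \<and> dist u0 z = r \<and> dist z y = r - j then
        (if dist u0 y = j then v y else 0) else 0)"
      by (rule sum.swap)
    also have "\<dots> = (\<Sum>y\<in>UNIV. of_nat (card {z. dist x z = 1 \<and> dist u0 z = r \<and> dist z y = r - j})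
        * (if dist u0 y = j then v y else 0))"
      by (intro sum.cong refl) (simp only: sum_if_card)
    also have "\<dots> = (\<Sum>y\<in>UNIV. of_nat (c_num R (r + 1 - j)) * (if dist x y = r + 1 - j then
        (if dist u0 y = j then v y else 0) else 0))"
    proof (intro sum.cong refl)
      fix y
      show "of_nat (card {z. dist x z = 1 \<and> dist u0 z = r \<and> dist z y = r - j}) * (if dist u0 y = j then v y else 0)
         = of_nat (c_num R (r + 1 - j)) * (if dist x y = r + 1 - j then (if dist u0 y = j then v y else 0) else 0)"
      proof (cases "dist u0 y = j")
        case True
        show ?thesis unfolding card_chain[OF jr rd \<open>dist u0 x = r + 1\<close> True] using True by simp
      qed simp
    qed
    also have "\<dots> = fscale (of_nat (c_num R (r + 1 - j))) (Eop (r + 1) (Aop (r + 1 - j) (Eop j v))) x"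
      unfolding fscale_apply Eop_apply[OF rd] Aop_apply[OF dr1] Eop_apply[OF dj]
      using True by (simp add: sum_distrib_left)
    finally show ?thesis .
  qed
qed

lemma A1_support:
  assumes d1: "1 \<le> d" and v: "\<forall>y. i < dist u0 y \<longrightarrow> v y = 0" and x: "i + 1 < dist u0 x"
  shows "Aop 1 v x = 0"
proof -
  have "Aop 1 v x = (\<Sum>y\<in>UNIV. if dist x y = 1 then v y else 0)" by (rule Aop_apply[OF d1])
  also have "\<dots> = 0"
  proof (rule sum.neutral, rule ballI)
    fix y
    have "dist u0 x \<le> dist u0 y + dist y x" by (rule triangle)
    then show "(if dist x y = 1 then v y else 0) = 0" using v x dist_sym[of y x] by auto
  qed
  finally show ?thesis by simp
qed

lemma A1_top:
  assumes d1: "i + 1 \<le> d" and v: "\<forall>y. i < dist u0 y \<longrightarrow> v y = 0"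
  shows "Eop (i + 1) (Aop 1 v) = Eop (i + 1) (Aop 1 (Eop i v))"
proof (rule ext)
  fix x
  have d1': "1 \<le> d" and di: "i \<le> d" using d1 by auto
  show "Eop (i + 1) (Aop 1 v) x = Eop (i + 1) (Aop 1 (Eop i v)) x"
    unfolding Eop_apply[OF d1] Aop_apply[OF d1'] Eop_apply[OF di]
  proof (cases "dist u0 x = i + 1")
    case True
    have "(\<Sum>y\<in>UNIV. if dist x y = 1 then v y else 0) = (\<Sum>y\<in>UNIV. if dist x y = 1 then (if dist u0 y = i then v y else 0) else 0)"
    proof (intro sum.cong refl)
      fix y
      have "dist u0 x \<le> dist u0 y + dist y x" by (rule triangle)
      then show "(if dist x y = 1 then v y else 0) = (if dist x y = 1 then (if dist u0 y = i then v y else 0) else 0)"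
        using v True dist_sym[of y x] by auto
    qed
    then show "(if dist u0 x = i + 1 then \<Sum>y\<in>UNIV. if dist x y = 1 then v y else 0 else 0) =
      (if dist u0 x = i + 1 then \<Sum>y\<in>UNIV. if dist x y = 1 then if dist u0 y = i then v y else 0 else 0 else 0)"
      by simp
  qed simp
qed

lemma lower_closed:
  assumes W: "T_module d R u0 W"
    and irr: "\<forall>W'. T_module d R u0 W' \<and> W' \<subseteq> W \<longrightarrow> W' = {0} \<or> W' = W"
    and i: "i + 1 \<le> d" and raise0: "\<forall>w\<in>W. Eop (i + 1) (Aop 1 (Eop i w)) = 0"
    and nz: "\<exists>w\<in>W. w \<noteq> 0 \<and> (\<forall>y. i < dist u0 y \<longrightarrow> w y = 0)"
  shows "\<forall>w\<in>W. \<forall>y. i < dist u0 y \<longrightarrow> w y = 0"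
proof -
  define U where "U = {w\<in>W. \<forall>y. i < dist u0 y \<longrightarrow> w y = 0}"
  have sW: "fvs.subspace W" using W by (rule Tm_sub)
  have TU: "T_module d R u0 U"
  proof (rule T_module_gen)
    show "fvs.subspace U"
      using sW unfolding U_def fvs.subspace_def by (auto simp: fscale_apply)
    show "\<forall>v\<in>U. Aop 1 v \<in> U" if d1: "1 \<le> d"
    proof
      fix v assume v: "v \<in> U"
      have vW: "v \<in> W" and vs: "\<forall>y. i < dist u0 y \<longrightarrow> v y = 0" using v by (auto simp: U_def)
      have "Aop 1 v y = 0" if y: "i < dist u0 y" for y
      proof (cases "dist u0 y = i + 1")
        case True
        have "Aop 1 v y = Eop (i + 1) (Aop 1 v) y" using True i by (simp add: Eop_apply)
        also have "\<dots> = Eop (i + 1) (Aop 1 (Eop i v)) y" by (simp only: A1_top[OF i vs])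
        also have "\<dots> = 0" using raise0 vW by simp
        finally show ?thesis .
      next
        case False
        then show ?thesis using A1_support[OF d1 vs] y by simp
      qed
      then show "Aop 1 v \<in> U" using Tm_A[OF W d1 vW] by (auto simp: U_def)
    qed
    show "Eop l v \<in> U" if "l \<le> d" "v \<in> U" for l v
      using that Tm_E[OF W] by (auto simp: U_def Eop_apply)
  qed
  have "U \<subseteq> W" by (auto simp: U_def)
  moreover have "U \<noteq> {0}" using nz by (auto simp: U_def)
  ultimately have "U = W" using irr TU by blast
  then show ?thesis by (auto simp: U_def)
qed

end

lemma dim1_span:
  fixes S :: "('a::finite \<Rightarrow> complex) set"
  assumes S: "fvs.subspace S" and d1: "fvs.dim S \<le> 1" and u: "u \<in> S" "u \<noteq> 0" and s: "s \<in> S"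
  shows "\<exists>a. s = fscale a u"
proof -
  have "S \<subseteq> fvs.span {u}"
  proof (rule ffd.card_ge_dim_independent)
    show "{u} \<subseteq> S" using u by simp
    show "fvs.independent {u}" using u by simp
    show "fvs.dim S \<le> card {u}" using d1 by simp
  qed
  then show ?thesis using s by (auto simp: fvs.span_singleton)
qed

context pst begin

definition supp :: "('a \<Rightarrow> complex) set \<Rightarrow> nat set" where
  "supp W = {i. i \<le> d \<and> Estar_img R u0 i W \<noteq> {0}}"

lemma Estar_eq: "Estar_img R u0 i W = Eop i ` W" by (simp add: Estar_img_def)

lemma subspace_Eimg: "fvs.subspace W \<Longrightarrow> fvs.subspace (Eop i ` W)"
  unfolding fvs.subspace_def
proof (intro conjI ballI allI)
  assume W: "0 \<in> W \<and> (\<forall>x\<in>W. \<forall>y\<in>W. x + y \<in> W) \<and> (\<forall>c. \<forall>x\<in>W. fscale c x \<in> W)"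
  show "0 \<in> Eop i ` W" using W cmat_apply_zero by (metis image_eqI)
  fix x y assume "x \<in> Eop i ` W" "y \<in> Eop i ` W"
  then obtain x' y' where "x' \<in> W" "y' \<in> W" "x = Eop i x'" "y = Eop i y'" by auto
  then show "x + y \<in> Eop i ` W" using W cmat_apply_add by (metis image_eqI)
next
  fix c x
  assume W: "0 \<in> W \<and> (\<forall>x\<in>W. \<forall>y\<in>W. x + y \<in> W) \<and> (\<forall>c. \<forall>x\<in>W. fscale c x \<in> W)"
    and "x \<in> Eop i ` W"
  then obtain x' where "x' \<in> W" "x = Eop i x'" by auto
  then show "fscale c x \<in> Eop i ` W" using W cmat_apply_scale by (metis image_eqI)
qed

lemma in_supp0: "0 \<in> W \<Longrightarrow> i \<in> supp W \<longleftrightarrow> i \<le> d \<and> (\<exists>w\<in>W. Eop i w \<noteq> 0)"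
  by (auto simp: supp_def Estar_eq) (metis cmat_apply_zero image_eqI)

lemma Eop_vanish: "i \<le> d \<Longrightarrow> dist u0 y \<noteq> i \<Longrightarrow> Eop i w y = 0"
  by (simp add: Eop_apply)

lemma Eop_nz: "i \<le> d \<Longrightarrow> Eop i w \<noteq> 0 \<Longrightarrow> \<exists>y. dist u0 y = i \<and> w y \<noteq> 0"
  by (auto simp: Eop_apply fun_eq_iff split: if_splits)

context
  fixes W assumes irr: "irreducible_T_module d R u0 W"
begin

lemma W_T: "T_module d R u0 W" using irr by (simp add: irreducible_T_module_def)
lemma W_ne: "W \<noteq> {0}" using irr by (simp add: irreducible_T_module_def)
lemma W_min: "\<forall>W'. T_module d R u0 W' \<and> W' \<subseteq> W \<longrightarrow> W' = {0} \<or> W' = W"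
  using irr by (simp add: irreducible_T_module_def)
lemma W_sub: "fvs.subspace W" using W_T by (rule Tm_sub)
lemma W0: "0 \<in> W" using W_sub fvs.subspace_0 by blast
lemmas in_supp = in_supp0[OF W0]

lemma supp_ne: "\<exists>i. i \<in> supp W"
proof -
  obtain w where w: "w \<in> W" "w \<noteq> 0" using W_ne W_sub fvs.subspace_0 by blast
  then obtain x where x: "w x \<noteq> 0" by (auto simp: fun_eq_iff)
  have "Eop (dist u0 x) w x = w x" using dist_le by (simp add: Eop_apply)
  then have "Eop (dist u0 x) w \<noteq> 0" using x by auto
  then show ?thesis using w dist_le in_supp by blast
qed

abbreviation "rho \<equiv> endpoint d R u0 W"

lemma rho_in: "rho \<in> supp W" and rho_le: "i \<in> supp W \<Longrightarrow> rho \<le> i"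
proof -
  obtain i where i: "i \<in> supp W" using supp_ne by blast
  have eq: "rho = (LEAST i. i \<in> supp W)" by (simp add: endpoint_def supp_def)
  show "rho \<in> supp W" unfolding eq using i by (rule LeastI)
  show "i \<in> supp W \<Longrightarrow> rho \<le> i" for i unfolding eq by (rule Least_le)
qed

lemma supp_le_d: "i \<in> supp W \<Longrightarrow> i \<le> d" by (simp add: supp_def)

lemma supp_down:
  assumes i: "i \<in> supp W" and ri: "rho < i"
  shows "i - 1 \<in> supp W"
proof (rule ccontr)
  assume nin: "i - 1 \<notin> supp W"
  have id: "i \<le> d" using i supp_le_d by blast
  have i1: "i - 1 + 1 = i" using ri by simp
  have zero: "\<forall>w\<in>W. Eop (i - 1) w = 0" using nin id in_supp[of "i - 1"] by auto
  have "\<forall>w\<in>W. \<forall>y. i - 1 < dist u0 y \<longrightarrow> w y = 0"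
  proof (rule lower_closed[OF W_T W_min])
    show "i - 1 + 1 \<le> d" using i1 id by simp
    show "\<forall>w\<in>W. Eop (i - 1 + 1) (Aop 1 (Eop (i - 1) w)) = 0"
      using zero by (simp add: cmat_apply_zero)
    obtain w where w: "w \<in> W" "Eop rho w \<noteq> 0" using rho_in in_supp by blast
    have rd: "rho \<le> d" using rho_in supp_le_d by blast
    show "\<exists>w\<in>W. w \<noteq> 0 \<and> (\<forall>y. i - 1 < dist u0 y \<longrightarrow> w y = 0)"
    proof (intro bexI conjI allI impI)
      show "Eop rho w \<in> W" using Tm_E[OF W_T rd w(1)] .
      show "Eop rho w \<noteq> 0" by (rule w(2))
      fix y assume "i - 1 < dist u0 y"
      then show "Eop rho w y = 0" using ri rd by (simp add: Eop_apply)
    qed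
  qed
  moreover obtain w where w: "w \<in> W" "Eop i w \<noteq> 0" using i in_supp by blast
  then obtain y where "dist u0 y = i" "w y \<noteq> 0" using Eop_nz id by blast
  ultimately show False using w ri by force
qed

abbreviation "delta \<equiv> module_diameter d R u0 W"

lemma supp_interval: "i \<in> supp W \<longleftrightarrow> rho \<le> i \<and> i \<le> rho + delta"
proof -
  have fin: "finite (supp W)" by (rule finite_subset[of _ "{..d}"]) (auto simp: supp_def)
  define M where "M = Max (supp W)"
  have M: "M \<in> supp W" using fin supp_ne unfolding M_def by (metis Max_in empty_iff)
  have down: "M - k \<ge> rho \<Longrightarrow> M - k \<in> supp W" for k
  proof (induction k)
    case 0 then show ?case using M by simp
  next
    case (Suc k)
    have Mk: "M - k \<in> supp W" using Suc by simp
    show ?case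
    proof (cases "k < M")
      case True
      then have "rho < M - k" using Suc.prems by simp
      with Mk have "M - k - 1 \<in> supp W" by (rule supp_down)
      then show ?thesis by simp
    next
      case False
      then show ?thesis using Mk by simp
    qed
  qed
  have eq: "supp W = {rho..M}"
  proof
    show "supp W \<subseteq> {rho..M}" using rho_le fin M_def by auto
    show "{rho..M} \<subseteq> supp W"
    proof
      fix i assume "i \<in> {rho..M}"
      then have "M - (M - i) \<ge> rho" "M - (M - i) = i" by auto
      then show "i \<in> supp W" using down[of "M - i"] by simp
    qed
  qed
  have "delta = M - rho"
    unfolding module_diameter_def using eq by (simp add: supp_def[symmetric])
  then show ?thesis using eq rho_le[OF M] by auto
qed

lemma top_le_d: "rho + delta \<le> d"
  using supp_interval[of "rho + delta"] supp_le_d by auto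

lemma raising:
  assumes i: "i \<in> supp W" and i1: "i + 1 \<in> supp W"
  shows "\<exists>w\<in>W. Eop (i + 1) (Aop 1 (Eop i w)) \<noteq> 0"
proof (rule ccontr)
  assume "\<not> ?thesis"
  then have z: "\<forall>w\<in>W. Eop (i + 1) (Aop 1 (Eop i w)) = 0" by blast
  have id: "i + 1 \<le> d" using i1 supp_le_d by blast
  have ri: "rho \<le> i" using rho_le i by blast
  have "\<forall>w\<in>W. \<forall>y. i < dist u0 y \<longrightarrow> w y = 0"
  proof (rule lower_closed[OF W_T W_min id z])
    obtain w where w: "w \<in> W" "Eop rho w \<noteq> 0" using rho_in in_supp by blast
    have rd: "rho \<le> d" using rho_in supp_le_d by blast
    show "\<exists>w\<in>W. w \<noteq> 0 \<and> (\<forall>y. i < dist u0 y \<longrightarrow> w y = 0)"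
    proof (intro bexI conjI allI impI)
      show "Eop rho w \<in> W" using Tm_E[OF W_T rd w(1)] .
      show "Eop rho w \<noteq> 0" by (rule w(2))
      fix y assume "i < dist u0 y"
      then show "Eop rho w y = 0" using ri rd by (simp add: Eop_apply)
    qed
  qed
  moreover obtain w where w: "w \<in> W" "Eop (i + 1) w \<noteq> 0" using i1 in_supp by blast
  then obtain y where "dist u0 y = i + 1" "w y \<noteq> 0" using Eop_nz id by blast
  ultimately show False using w by force
qed

end

end

lemma cmat_kernel:
  assumes det: "det (c_matrix R p e r) \<noteq> 0"
    and eq: "\<And>i. i < p \<Longrightarrow> (\<Sum>h<p. (\<Prod>s = 1..h. real (c_num R (r (i + 1) - e + p - s))) * \<beta> h) = 0"
  shows "\<forall>h<p. \<beta> h = 0"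
proof -
  define M where "M = c_matrix R p e r"
  have M: "M \<in> carrier_mat p p" by (simp add: M_def c_matrix_def)
  define v where "v = vec p \<beta>"
  have v: "v \<in> carrier_vec p" by (simp add: v_def)
  have Mv: "M *\<^sub>v v = 0\<^sub>v p"
  proof (rule eq_vecI)
    fix i assume i: "i < dim_vec (0\<^sub>v p :: real vec)"
    then have ip: "i < p" by simp
    have "(M *\<^sub>v v) $ i = (\<Sum>h\<in>{0..<p}. M $$ (i, h) * v $ h)"
      using ip M v by (simp add: scalar_prod_def row_def)
    also have "\<dots> = (\<Sum>h<p. (\<Prod>s = 1..h. real (c_num R (r (i + 1) - e + p - s))) * \<beta> h)"
      using ip by (intro sum.cong) (auto simp: M_def c_matrix_def v_def)
    also have "\<dots> = 0" using eq ip by simp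
    finally show "(M *\<^sub>v v) $ i = 0\<^sub>v p $ i" using ip by simp
  qed (use M in simp)
  have "v = 0\<^sub>v p"
  proof (rule ccontr)
    assume "v \<noteq> 0\<^sub>v p"
    then have "det M = 0" using det_0_iff_vec_prod_zero[OF M] v Mv by blast
    then show False using det M_def by simp
  qed
  then show ?thesis by (auto simp: v_def vec_eq_iff)
qed

lemma prod_split:
  fixes f :: "nat \<Rightarrow> 'b::comm_monoid_mult"
  shows "h < N \<Longrightarrow> (\<Prod>s = 1..h. f (N - s)) * (\<Prod>s = 1..N - 1 - h. f s) = (\<Prod>s = 1..N - 1. f s)"
proof (induction h)
  case 0 then show ?case by simp
next
  case (Suc h)
  have a: "(\<Prod>s = 1..Suc h. f (N - s)) = (\<Prod>s = 1..h. f (N - s)) * f (N - Suc h)"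
    by (simp add: prod.atLeast1_atMost_eq prod.nat_ivl_Suc' mult.commute)
  have b: "(\<Prod>s = 1..N - 1 - h. f s) = (\<Prod>s = 1..N - 1 - Suc h. f s) * f (N - Suc h)"
  proof -
    have "N - 1 - h = Suc (N - 1 - Suc h)" using Suc.prems by simp
    moreover have "N - Suc h = Suc (N - 1 - Suc h)" using Suc.prems by simp
    ultimately show ?thesis by (simp add: prod.nat_ivl_Suc')
  qed
  show ?case using Suc a b by (simp add: ac_simps)
qed


context pst begin

primrec chv :: "('a \<Rightarrow> complex) \<Rightarrow> nat \<Rightarrow> nat \<Rightarrow> ('a \<Rightarrow> complex)" where
  "chv u b 0 = u"
| "chv u b (Suc k) = Eop (b + Suc k) (Aop 1 (chv u b k))"

definition Cc :: "nat \<Rightarrow> complex" where "Cc m = (\<Prod>s = 1..m. of_nat (c_num R s))"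

lemma Cc_nz: "m \<le> d \<Longrightarrow> Cc m \<noteq> 0"
proof -
  assume m: "m \<le> d"
  have "\<forall>s\<in>{1..m}. (of_nat (c_num R s) :: complex) \<noteq> 0"
  proof
    fix s assume "s \<in> {1..m}"
    then have "c_num R s \<ge> 1" using c_pos m by auto
    then show "(of_nat (c_num R s) :: complex) \<noteq> 0" by simp
  qed
  then show ?thesis unfolding Cc_def by (simp add: prod_zero_iff)
qed

lemma Cc_Suc: "Cc (Suc m) = Cc m * of_nat (c_num R (Suc m))"
  by (simp add: Cc_def)

context
  fixes W assumes irr: "irreducible_T_module d R u0 W" and thin: "thin_module d R u0 W"
begin

lemma thin_span:
  assumes i: "i \<le> d" and u: "u \<in> W" "Eop i u = u" "u \<noteq> 0" and w: "w \<in> W"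
  shows "\<exists>a. Eop i w = fscale a u"
proof (rule dim1_span)
  show "fvs.subspace (Eop i ` W)" by (rule subspace_Eimg[OF W_sub[OF irr]])
  show "fvs.dim (Eop i ` W) \<le> 1" using thin i by (simp add: thin_module_def Estar_eq)
  show "u \<in> Eop i ` W" using u by (metis image_eqI)
  show "u \<noteq> 0" by (rule u(3))
  show "Eop i w \<in> Eop i ` W" using w by simp
qed

context
  fixes w0 assumes w0: "w0 \<in> W" "Eop (rho W) w0 \<noteq> 0"
begin

abbreviation "ch k \<equiv> chv (Eop (rho W) w0) (rho W) k"

lemma ch_props: "k \<le> delta W \<Longrightarrow> ch k \<in> W \<and> Eop (rho W + k) (ch k) = ch k \<and> ch k \<noteq> 0"
proof (induction k)
  case 0
  have rd: "rho W \<le> d" using rho_in[OF irr] supp_le_d[OF irr] by blast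
  have c0: "ch 0 = Eop (rho W) w0" by simp
  have e0: "Eop (rho W + 0) (ch 0) = ch 0" using rd by (simp add: EE)
  show ?case using e0 Tm_E[OF W_T[OF irr] rd w0(1)] w0(2) by (simp only: c0) blast
next
  case (Suc k)
  have IH: "ch k \<in> W" "Eop (rho W + k) (ch k) = ch k" "ch k \<noteq> 0" using Suc by auto
  have td: "rho W + delta W \<le> d" by (rule top_le_d[OF irr])
  have d1: "rho W + Suc k \<le> d" "1 \<le> d" using Suc.prems td by auto
  have dk: "rho W + k \<le> d" using d1 by simp
  have mem: "ch (Suc k) \<in> W"
    using Tm_E[OF W_T[OF irr] d1(1)] Tm_A[OF W_T[OF irr] d1(2) IH(1)] by simp
  have idem: "Eop (rho W + Suc k) (ch (Suc k)) = ch (Suc k)"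
    using d1 by (simp add: EE)
  have s1: "rho W + k \<in> supp W" "rho W + k + 1 \<in> supp W"
    using supp_interval[OF irr] Suc.prems by auto
  obtain w where w: "w \<in> W" "Eop (rho W + k + 1) (Aop 1 (Eop (rho W + k) w)) \<noteq> 0"
    using raising[OF irr s1] by blast
  obtain a where a: "Eop (rho W + k) w = fscale a (ch k)"
    using thin_span[OF dk IH w(1)] by blast
  have "Eop (rho W + k + 1) (Aop 1 (Eop (rho W + k) w)) = fscale a (ch (Suc k))"
    unfolding a by (simp add: cmat_apply_scale)
  then have "ch (Suc k) \<noteq> 0" using w(2) by (auto simp: fscale_def)
  then show ?case using mem idem by (intro conjI)
qed

lemma gval:
  assumes am: "a + m \<le> delta W"
  shows "fscale (Cc m) (Eop (rho W + a + m) (Aop m (ch a))) = ch (a + m)"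
  using am
proof (induction m)
  case 0
  have "Eop (rho W + a) (ch a) = ch a" using ch_props[of a] 0 by simp
  then show ?case by (simp add: A0 Cc_def fscale_def)
next
  case (Suc m)
  have td: "rho W + delta W \<le> d" by (rule top_le_d[OF irr])
  define j where "j = rho W + a"
  have jr: "j \<le> j + m" and rd: "j + m + 1 \<le> d" using Suc.prems td j_def by auto
  have v: "Eop j (ch a) = ch a" using ch_props[of a] Suc.prems j_def by simp
  have ch: "Eop (j + m + 1) (Aop 1 (Eop (j + m) (Aop (j + m - j) (Eop j (ch a)))))
       = fscale (of_nat (c_num R (j + m + 1 - j))) (Eop (j + m + 1) (Aop (j + m + 1 - j) (Eop j (ch a))))"
    by (rule chain[OF jr rd])
  then have ch': "Eop (j + m + 1) (Aop 1 (Eop (j + m) (Aop m (ch a))))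
       = fscale (of_nat (c_num R (Suc m))) (Eop (j + m + 1) (Aop (Suc m) (ch a)))"
    unfolding v by simp
  have IH: "fscale (Cc m) (Eop (j + m) (Aop m (ch a))) = ch (a + m)"
    using Suc j_def by simp
  have "fscale (Cc (Suc m)) (Eop (rho W + a + Suc m) (Aop (Suc m) (ch a)))
      = fscale (Cc m) (fscale (of_nat (c_num R (Suc m))) (Eop (j + m + 1) (Aop (Suc m) (ch a))))"
    unfolding Cc_Suc j_def by (simp add: fscale_def mult.assoc)
  also have "\<dots> = fscale (Cc m) (Eop (j + m + 1) (Aop 1 (Eop (j + m) (Aop m (ch a)))))"
    unfolding ch' ..
  also have "\<dots> = Eop (j + m + 1) (Aop 1 (fscale (Cc m) (Eop (j + m) (Aop m (ch a)))))"
    by (simp add: cmat_apply_scale)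
  also have "\<dots> = Eop (j + m + 1) (Aop 1 (ch (a + m)))" by (simp only: IH)
  also have "\<dots> = ch (a + Suc m)" by (simp add: j_def add.assoc)
  finally show ?case .
qed

end

end

end

lemma fscale_sum: "fscale (c::'k::field) (\<Sum>i\<in>I. (f i :: 'b \<Rightarrow> 'k)) = (\<Sum>i\<in>I. fscale c (f i))"
  by (rule ext) (simp add: fscale_apply sum_fun_apply sum_distrib_left)

locale pmain = pst d R u0 for d :: nat and R :: "nat \<Rightarrow> ('a::finite \<times> 'a) set" and u0 :: 'a +
  fixes e p :: nat and r :: "nat \<Rightarrow> nat"
  assumes p_pos: "1 \<le> p" and e_ge: "p - 1 \<le> e" and e_le: "e \<le> r 1"
    and r_mono: "\<forall>i. 1 \<le> i \<and> i < p \<longrightarrow> r i < r (i + 1)" and r_le: "r p \<le> d"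
begin

lemma r_strict: "1 \<le> s \<Longrightarrow> s < t \<Longrightarrow> t \<le> p \<Longrightarrow> r s < r t"
proof (induction t)
  case 0 then show ?case by simp
next
  case (Suc t)
  show ?case
  proof (cases "s < t")
    case True
    then have "r s < r t" using Suc by simp
    also have "r t < r (t + 1)" using r_mono Suc.prems True by auto
    finally show ?thesis by simp
  next
    case False
    then have "s = t" using Suc.prems by simp
    then show ?thesis using r_mono Suc.prems by auto
  qed
qed

lemma r_mono_le: "1 \<le> s \<Longrightarrow> s \<le> t \<Longrightarrow> t \<le> p \<Longrightarrow> r s \<le> r t"
  using r_strict[of s t] by (cases "s = t") auto

lemma r_bounds: "t \<in> {1..p} \<Longrightarrow> e \<le> r t \<and> r t \<le> r p \<and> r t \<le> d"
  using r_mono_le[of 1 t] r_mono_le[of t p] e_le r_le by auto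

lemma r_inj: "s \<in> {1..p} \<Longrightarrow> t \<in> {1..p} \<Longrightarrow> r s = r t \<Longrightarrow> s = t"
  using r_strict[of s t] r_strict[of t s] by (cases s t rule: linorder_cases) auto

lemma e_d: "e \<le> d" using r_bounds[of p] p_pos by auto
lemma e_rp: "e \<le> r p" using r_bounds[of p] p_pos by auto

definition Psi :: "('a \<Rightarrow> complex) \<Rightarrow> ('a \<Rightarrow> complex)" where
  "Psi v = (\<Sum>t\<in>{1..p}. \<Sum>j\<in>{0..e}. Eop (r t) (Aop (r t - j) (Eop j v)))"

lemma Psi_add: "Psi (v + w) = Psi v + Psi w"
  unfolding Psi_def by (simp only: cmat_apply_add sum.distrib)

lemma Psi_scale: "Psi (fscale c v) = fscale c (Psi v)"
  unfolding Psi_def by (simp only: cmat_apply_scale fscale_sum)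

lemma Psi_zero: "Psi 0 = 0"
  unfolding Psi_def by (simp only: cmat_apply_zero sum.neutral_const)

lemma Psi_T: "T_module d R u0 U \<Longrightarrow> v \<in> U \<Longrightarrow> Psi v \<in> U"
  unfolding Psi_def
proof -
  assume U: "T_module d R u0 U" and v: "v \<in> U"
  have "Eop (r t) (Aop (r t - j) (Eop j v)) \<in> U" if "t \<in> {1..p}" "j \<in> {0..e}" for t j
  proof -
    have "r t \<le> d" "r t - j \<le> d" "j \<le> d" using r_bounds[OF that(1)] that(2) e_d by auto
    then show ?thesis using Tm_E[OF U] Tm_A[OF U] v by blast
  qed
  then show "(\<Sum>t\<in>{1..p}. \<Sum>j\<in>{0..e}. Eop (r t) (Aop (r t - j) (Eop j v))) \<in> U"
    by (intro fvs.subspace_sum[OF Tm_sub[OF U]] ballI) auto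
qed

lemma Psi_decomp: "Psi v = (\<Sum>j\<in>{0..e}. Psi (Eop j v))"
proof -
  have "Psi (Eop j v) = (\<Sum>t\<in>{1..p}. Eop (r t) (Aop (r t - j) (Eop j v)))" if j: "j \<in> {0..e}" for j
  proof -
    have "Psi (Eop j v) = (\<Sum>t\<in>{1..p}. \<Sum>j'\<in>{0..e}. if j' = j then Eop (r t) (Aop (r t - j) (Eop j v)) else 0)"
      unfolding Psi_def
    proof (intro sum.cong refl)
      fix t j' assume "j' \<in> {0..e}"
      then show "Eop (r t) (Aop (r t - j') (Eop j' (Eop j v))) = (if j' = j then Eop (r t) (Aop (r t - j) (Eop j v)) else 0)"
        using j e_d by (simp add: EE cmat_apply_zero)
    qed
    also have "\<dots> = (\<Sum>t\<in>{1..p}. Eop (r t) (Aop (r t - j) (Eop j v)))"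
      using j by (simp add: sum.delta)
    finally show ?thesis .
  qed
  then have "(\<Sum>j\<in>{0..e}. Psi (Eop j v)) = (\<Sum>j\<in>{0..e}. \<Sum>t\<in>{1..p}. Eop (r t) (Aop (r t - j) (Eop j v)))"
    by (rule sum.cong[OF refl])
  also have "\<dots> = Psi v" unfolding Psi_def by (rule sum.swap)
  finally show ?thesis by simp
qed


definition Cr :: "nat \<Rightarrow> real" where "Cr m = (\<Prod>s = 1..m. real (c_num R s))"

lemma Cc_Cr: "Cc m = complex_of_real (Cr m)"
  by (simp add: Cc_def Cr_def)

lemma Cr_nz: "m \<le> d \<Longrightarrow> Cr m \<noteq> 0"
  using Cc_nz[of m] by (simp add: Cc_Cr)

lemma entry_eq:
  assumes t: "t \<in> {1..p}" and j: "j \<in> {e + 1 - p..e}"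
  shows "(\<Prod>s = 1..j - (e + 1 - p). real (c_num R (r t - e + p - s))) = Cr (r t - e + p - 1) / Cr (r t - j)"
proof -
  define N where "N = r t - e + p"
  define h where "h = j - (e + 1 - p)"
  have et: "e \<le> r t" "r t \<le> d" using r_bounds[OF t] by auto
  have hN: "h < N" using j et p_pos by (auto simp: N_def h_def)
  have Nh: "N - 1 - h = r t - j" using j et p_pos e_ge by (auto simp: N_def h_def)
  have "(\<Prod>s = 1..h. real (c_num R (N - s))) * Cr (N - 1 - h) = Cr (N - 1)"
    unfolding Cr_def by (rule prod_split[OF hN])
  moreover have "Cr (N - 1 - h) \<noteq> 0" using Nh et by (intro Cr_nz) simp
  ultimately show ?thesis unfolding Nh[symmetric] by (simp add: N_def h_def field_simps)
qed

lemma kernel_apply: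
  assumes det: "det (c_matrix R p e r) \<noteq> 0" and j0: "e + 1 - p \<le> j0"
    and eq: "\<forall>t\<in>{1..p}. (\<Sum>j\<in>{j0..e}. \<gamma> j / Cr (r t - j)) = 0"
  shows "\<forall>j\<in>{j0..e}. \<gamma> j = 0"
proof -
  define q where "q = e + 1 - p"
  have qp: "q + p = e + 1" using e_ge p_pos by (simp add: q_def)
  define \<beta> where "\<beta> h = (if j0 \<le> q + h then \<gamma> (q + h) else 0)" for h
  have sumj: "(\<Sum>j\<in>{j0..e}. f j) = (\<Sum>h<p. if j0 \<le> q + h then f (q + h) else 0)" for f :: "nat \<Rightarrow> real"
  proof -
    have "(\<Sum>j\<in>{j0..e}. f j) = (\<Sum>j\<in>{q..<e + 1}. if j0 \<le> j then f j else 0)"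
      using j0 unfolding q_def by (intro sum.mono_neutral_cong_left) auto
    also have "\<dots> = (\<Sum>j\<in>{0 + q..<p + q}. if j0 \<le> j then f j else 0)" using qp by (simp add: add.commute)
    also have "\<dots> = (\<Sum>h\<in>{0..<p}. if j0 \<le> h + q then f (h + q) else 0)"
      by (rule sum.shift_bounds_nat_ivl)
    also have "\<dots> = (\<Sum>h<p. if j0 \<le> q + h then f (q + h) else 0)"
      unfolding lessThan_atLeast0 by (intro sum.cong refl) (simp add: add.commute)
    finally show ?thesis .
  qed
  have rows: "(\<Sum>h<p. (\<Prod>s = 1..h. real (c_num R (r (i + 1) - e + p - s))) * \<beta> h) = 0" if i: "i < p" for i
  proof -
    define t where "t = i + 1"
    have t: "t \<in> {1..p}" using i by (simp add: t_def)
    have "(\<Sum>h<p. (\<Prod>s = 1..h. real (c_num R (r t - e + p - s))) * \<beta> h)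
        = (\<Sum>h<p. if j0 \<le> q + h then Cr (r t - e + p - 1) / Cr (r t - (q + h)) * \<gamma> (q + h) else 0)"
    proof (intro sum.cong refl)
      fix h assume h: "h \<in> {..<p}"
      show "(\<Prod>s = 1..h. real (c_num R (r t - e + p - s))) * \<beta> h =
          (if j0 \<le> q + h then Cr (r t - e + p - 1) / Cr (r t - (q + h)) * \<gamma> (q + h) else 0)"
      proof (cases "j0 \<le> q + h")
        case True
        have jj: "q + h \<in> {e + 1 - p..e}" using h qp by (auto simp: q_def)
        have hh: "q + h - (e + 1 - p) = h" by (simp add: q_def)
        show ?thesis using True entry_eq[OF t jj] unfolding hh by (simp add: \<beta>_def)
      qed (simp add: \<beta>_def)
    qed
    also have "\<dots> = (\<Sum>j\<in>{j0..e}. Cr (r t - e + p - 1) / Cr (r t - j) * \<gamma> j)"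
      by (rule sumj[symmetric])
    also have "\<dots> = Cr (r t - e + p - 1) * (\<Sum>j\<in>{j0..e}. \<gamma> j / Cr (r t - j))"
      by (simp add: sum_distrib_left)
    also have "\<dots> = 0" using eq t by simp
    finally show ?thesis by (simp add: t_def)
  qed
  have "\<forall>h<p. \<beta> h = 0" by (rule cmat_kernel[OF det rows])
  then show ?thesis
  proof (intro ballI)
    fix j assume allz: "\<forall>h<p. \<beta> h = 0" and j: "j \<in> {j0..e}"
    have "j - q < p" "q + (j - q) = j" using j j0 qp by (auto simp: q_def)
    then show "\<gamma> j = 0" using allz[rule_format, of "j - q"] j by (simp add: \<beta>_def)
  qed
qed

end

context pmain begin

context
  fixes W w0
  assumes irr: "irreducible_T_module d R u0 W" and thin: "thin_module d R u0 W"
    and hyp: "rho W \<le> e \<Longrightarrow> r p \<le> rho W + delta W"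
    and w0: "w0 \<in> W" "Eop (rho W) w0 \<noteq> 0"
    and rho_e: "rho W \<le> e"
begin

abbreviation "cv k \<equiv> chv (Eop (rho W) w0) (rho W) k"

lemma top: "r p \<le> rho W + delta W" using hyp rho_e by blast

lemma cvp: "k \<le> delta W \<Longrightarrow> cv k \<in> W \<and> Eop (rho W + k) (cv k) = cv k \<and> cv k \<noteq> 0"
  by (rule ch_props[OF irr thin w0])

lemma rt_le: "t \<in> {1..p} \<Longrightarrow> rho W \<le> r t \<and> r t - rho W \<le> delta W"
  using r_bounds[of t] rho_e top by auto

lemma Eop_cv: "a \<le> delta W \<Longrightarrow> j \<le> d \<Longrightarrow> Eop j (cv a) = (if j = rho W + a then cv a else 0)"
proof -
  assume a: "a \<le> delta W" and j: "j \<le> d"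
  have rd: "rho W + a \<le> d" using a top_le_d[OF irr] by simp
  have "Eop j (cv a) = Eop j (Eop (rho W + a) (cv a))" using cvp[OF a] by simp
  also have "\<dots> = (if j = rho W + a then Eop (rho W + a) (cv a) else 0)" using j rd by (simp only: EE)
  also have "\<dots> = (if j = rho W + a then cv a else 0)" using cvp[OF a] by simp
  finally show ?thesis .
qed

lemma Psi_cv:
  assumes a: "rho W + a \<le> e"
  shows "Psi (cv a) = (\<Sum>t\<in>{1..p}. fscale (1 / Cc (r t - (rho W + a))) (cv (r t - rho W)))"
  unfolding Psi_def
proof (intro sum.cong refl)
  fix t assume t: "t \<in> {1..p}"
  have ad: "a \<le> delta W" using a top e_rp by simp
  have "(\<Sum>j\<in>{0..e}. Eop (r t) (Aop (r t - j) (Eop j (cv a))))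
      = (\<Sum>j\<in>{0..e}. if j = rho W + a then Eop (r t) (Aop (r t - (rho W + a)) (cv a)) else 0)"
  proof (intro sum.cong refl)
    fix j assume "j \<in> {0..e}"
    then have "j \<le> d" using e_d by simp
    then show "Eop (r t) (Aop (r t - j) (Eop j (cv a))) = (if j = rho W + a then Eop (r t) (Aop (r t - (rho W + a)) (cv a)) else 0)"
      using Eop_cv[OF ad] by (simp add: cmat_apply_zero)
  qed
  also have "\<dots> = Eop (r t) (Aop (r t - (rho W + a)) (cv a))"
    using a by (simp add: sum.delta)
  also have "\<dots> = fscale (1 / Cc (r t - (rho W + a))) (cv (r t - rho W))"
  proof -
    define m where "m = r t - (rho W + a)"
    have am: "a + m \<le> delta W" and rt: "rho W + a + m = r t" and am2: "a + m = r t - rho W"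
      using rt_le[OF t] r_bounds[OF t] a by (auto simp: m_def)
    have md: "m \<le> d" using r_bounds[OF t] unfolding m_def by linarith
    have g: "fscale (Cc m) (Eop (rho W + a + m) (Aop m (cv a))) = cv (a + m)"
      by (rule gval[OF irr thin w0 am])
    have "fscale (1 / Cc m) (cv (a + m)) = Eop (rho W + a + m) (Aop m (cv a))"
      unfolding g[symmetric] using Cc_nz[OF md] by (simp add: fscale_def)
    then show ?thesis unfolding m_def[symmetric] using rt am2 by simp
  qed
  finally show "(\<Sum>j\<in>{0..e}. Eop (r t) (Aop (r t - j) (Eop j (cv a)))) =
    fscale (1 / Cc (r t - (rho W + a))) (cv (r t - rho W))" .
qed

lemma eval_pt:
  assumes t: "t \<in> {1..p}"
  shows "\<exists>x. cv (r t - rho W) x \<noteq> 0 \<and> (\<forall>t'\<in>{1..p}. t' \<noteq> t \<longrightarrow> cv (r t' - rho W) x = 0)"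
proof -
  have k: "r t - rho W \<le> delta W" and rt: "rho W + (r t - rho W) = r t" using rt_le[OF t] by auto
  have P: "cv (r t - rho W) \<in> W" "Eop (r t) (cv (r t - rho W)) = cv (r t - rho W)" "cv (r t - rho W) \<noteq> 0"
    using cvp[OF k] rt by auto
  obtain x where x: "cv (r t - rho W) x \<noteq> 0" using P(3) by (auto simp: fun_eq_iff)
  have dx: "dist u0 x = r t"
  proof (rule ccontr)
    assume "dist u0 x \<noteq> r t"
    then have "Eop (r t) (cv (r t - rho W)) x = 0" using r_bounds[OF t] by (simp add: Eop_apply)
    then show False using P(2) x by simp
  qed
  have "cv (r t' - rho W) x = 0" if t': "t' \<in> {1..p}" "t' \<noteq> t" for t'
  proof -
    have k': "r t' - rho W \<le> delta W" and rt': "rho W + (r t' - rho W) = r t'" using rt_le[OF t'(1)] by auto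
    have "cv (r t' - rho W) x = Eop (r t') (cv (r t' - rho W)) x" using cvp[OF k'] rt' by simp
    also have "\<dots> = 0" using dx r_inj[OF t'(1) t] t' r_bounds[OF t'(1)] by (auto simp: Eop_apply)
    finally show ?thesis .
  qed
  then show ?thesis using x by blast
qed

lemma indep_b:
  assumes det: "det (c_matrix R p e r) \<noteq> 0"
    and j0: "rho W \<le> j0" "e + 1 - p \<le> j0"
    and z: "(\<Sum>j\<in>{j0..e}. fscale (b j) (Psi (cv (j - rho W)))) = 0"
  shows "\<forall>j\<in>{j0..e}. b j = 0"
proof -
  have step1: "(\<Sum>j\<in>{j0..e}. b j / Cc (r t - j)) = 0" if t: "t \<in> {1..p}" for t
  proof -
    obtain x where x: "cv (r t - rho W) x \<noteq> 0" "\<forall>t'\<in>{1..p}. t' \<noteq> t \<longrightarrow> cv (r t' - rho W) x = 0"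
      using eval_pt[OF t] by blast
    have "0 = (\<Sum>j\<in>{j0..e}. fscale (b j) (Psi (cv (j - rho W)))) x" using z by simp
    also have "\<dots> = (\<Sum>j\<in>{j0..e}. b j * (1 / Cc (r t - j) * cv (r t - rho W) x))"
    proof (unfold sum_fun_apply fscale_apply, intro sum.cong refl)
      fix j assume j: "j \<in> {j0..e}"
      have a: "rho W + (j - rho W) \<le> e" and ja: "rho W + (j - rho W) = j" using j j0 by auto
      have "Psi (cv (j - rho W)) x = (\<Sum>t'\<in>{1..p}. 1 / Cc (r t' - j) * cv (r t' - rho W) x)"
        unfolding Psi_cv[OF a] ja by (simp add: sum_fun_apply fscale_apply)
      also have "\<dots> = (\<Sum>t'\<in>{1..p}. if t' = t then 1 / Cc (r t - j) * cv (r t - rho W) x else 0)"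
        using x(2) by (intro sum.cong refl) auto
      also have "\<dots> = 1 / Cc (r t - j) * cv (r t - rho W) x" using t by (simp add: sum.delta)
      finally show "b j * Psi (cv (j - rho W)) x = b j * (1 / Cc (r t - j) * cv (r t - rho W) x)" by simp
    qed
    also have "\<dots> = (\<Sum>j\<in>{j0..e}. b j / Cc (r t - j)) * cv (r t - rho W) x"
      by (simp add: sum_distrib_right)
    finally show ?thesis using x(1) by simp
  qed
  have re: "\<forall>t\<in>{1..p}. (\<Sum>j\<in>{j0..e}. Re (b j) / Cr (r t - j)) = 0"
  proof
    fix t assume t: "t \<in> {1..p}"
    have "Re (\<Sum>j\<in>{j0..e}. b j / Cc (r t - j)) = 0" using step1[OF t] by simp
    then show "(\<Sum>j\<in>{j0..e}. Re (b j) / Cr (r t - j)) = 0" by (simp add: Cc_Cr)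
  qed
  have im: "\<forall>t\<in>{1..p}. (\<Sum>j\<in>{j0..e}. Im (b j) / Cr (r t - j)) = 0"
  proof
    fix t assume t: "t \<in> {1..p}"
    have "Im (\<Sum>j\<in>{j0..e}. b j / Cc (r t - j)) = 0" using step1[OF t] by simp
    then show "(\<Sum>j\<in>{j0..e}. Im (b j) / Cr (r t - j)) = 0" by (simp add: Cc_Cr Im_sum)
  qed
  have "\<forall>j\<in>{j0..e}. Re (b j) = 0" using kernel_apply[OF det j0(2) re] .
  moreover have "\<forall>j\<in>{j0..e}. Im (b j) = 0" using kernel_apply[OF det j0(2) im] .
  ultimately show ?thesis by (simp add: complex_eq_iff)
qed

lemma dimE:
  assumes j: "j \<in> {e + 1 - p..e}"
  shows "fvs.dim (Eop j ` W) = (if rho W \<le> j then 1 else 0)"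
proof (cases "rho W \<le> j")
  case True
  have jd: "j \<le> d" using j e_d by simp
  have "j \<in> supp W" using supp_interval[OF irr] True j top e_rp by auto
  then obtain w where w: "w \<in> W" "Eop j w \<noteq> 0" using in_supp[OF irr] by blast
  have "\<not> (Eop j ` W \<subseteq> {0})" using w by auto
  then have nz: "fvs.dim (Eop j ` W) \<noteq> 0"
  proof (intro notI)
    assume "\<not> (Eop j ` W \<subseteq> {0})" "fvs.dim (Eop j ` W) = 0"
    then show False by (simp only: ffd.dim_eq_0)
  qed
  have le: "fvs.dim (Eop j ` W) \<le> 1" using thin jd by (simp add: thin_module_def Estar_eq)
  have "fvs.dim (Eop j ` W) = 1" using nz le by linarith
  then show ?thesis using True by simp
next
  case False
  have jd: "j \<le> d" using j e_d by simp
  have "j \<notin> supp W" using rho_le[OF irr] False by force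
  then have "\<forall>w\<in>W. Eop j w = 0" using in_supp[OF irr] jd by blast
  then have "Eop j ` W \<subseteq> {0}" by auto
  then show ?thesis using False by simp
qed

lemma count_B:
  assumes det: "det (c_matrix R p e r) \<noteq> 0"
  shows "fvs.dim (Psi ` W) = (\<Sum>j\<in>{e + 1 - p..e}. fvs.dim (Eop j ` W))"
proof -
  define j0 where "j0 = max (rho W) (e + 1 - p)"
  have j0: "rho W \<le> j0" "e + 1 - p \<le> j0" by (auto simp: j0_def)
  have "(\<Sum>j\<in>{e + 1 - p..e}. fvs.dim (Eop j ` W)) = (\<Sum>j\<in>{e + 1 - p..e}. if rho W \<le> j then 1 else 0)"
    by (intro sum.cong refl) (rule dimE)
  also have "\<dots> = (\<Sum>j\<in>{j0..e}. 1)"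
    by (rule sum.mono_neutral_cong_right) (auto simp: j0_def)
  also have "\<dots> = e + 1 - j0" by simp
  finally have rhs: "(\<Sum>j\<in>{e + 1 - p..e}. fvs.dim (Eop j ` W)) = e + 1 - j0" .
  define f where "f j = Psi (cv (j - rho W))" for j
  have fam: "fvs.independent (f ` {j0..e}) \<and> card (f ` {j0..e}) = card {j0..e}"
  proof (rule family_indep)
    show "finite {j0..e}" by simp
    fix c assume "(\<Sum>j\<in>{j0..e}. fscale (c j) (f j)) = 0"
    then show "\<forall>j\<in>{j0..e}. c j = 0" unfolding f_def by (rule indep_b[OF det j0])
  qed
  have cvW: "j \<le> e \<Longrightarrow> cv (j - rho W) \<in> W" for j
    using cvp[of "j - rho W"] top e_rp by simp
  have fsub: "f ` {j0..e} \<subseteq> Psi ` W" using cvW by (auto simp: f_def)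
  have lower: "e + 1 - j0 \<le> fvs.dim (Psi ` W)"
    using ffd.independent_card_le_dim[OF fsub] fam by simp
  have upper: "fvs.dim (Psi ` W) \<le> e + 1 - j0"
  proof (cases "e + 1 - p \<le> rho W")
    case True
    then have j0r: "j0 = rho W" by (simp add: j0_def)
    have "Psi ` W \<subseteq> fvs.span (f ` {j0..e})"
    proof
      fix v assume "v \<in> Psi ` W"
      then obtain w where w: "w \<in> W" "v = Psi w" by auto
      have "Psi (Eop j w) \<in> fvs.span (f ` {j0..e})" if j: "j \<in> {0..e}" for j
      proof (cases "rho W \<le> j")
        case True
        have k: "j - rho W \<le> delta W" and jj: "rho W + (j - rho W) = j" using j True top e_rp by auto
        have u: "cv (j - rho W) \<in> W" "Eop j (cv (j - rho W)) = cv (j - rho W)" "cv (j - rho W) \<noteq> 0"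
          using cvp[OF k] jj by auto
        obtain a where a: "Eop j w = fscale a (cv (j - rho W))"
          using thin_span[OF irr thin _ u w(1)] j e_d by auto
        have "Psi (Eop j w) = fscale a (f j)" unfolding a Psi_scale f_def ..
        also have "\<dots> \<in> fvs.span (f ` {j0..e})"
          using j True j0r by (intro fvs.span_scale fvs.span_base) auto
        finally show ?thesis .
      next
        case False
        have "j \<notin> supp W" using rho_le[OF irr] False by force
        then have "Eop j w = 0" using in_supp[OF irr] j e_d w(1) by auto
        then show ?thesis by (simp add: Psi_zero fvs.span_zero)
      qed
      then show "v \<in> fvs.span (f ` {j0..e})"
        unfolding w(2) Psi_decomp[of w] by (intro fvs.span_sum) auto
    qed
    then have "fvs.dim (Psi ` W) \<le> card (f ` {j0..e})" by (rule fvs.dim_le_card) simp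
    then show ?thesis using fam by simp
  next
    case False
    then have j0r: "j0 = e + 1 - p" by (simp add: j0_def)
    define H where "H = (\<lambda>t. cv (r t - rho W)) ` {1..p}"
    have "Psi ` W \<subseteq> fvs.span H"
    proof
      fix v assume "v \<in> Psi ` W"
      then obtain w where w: "w \<in> W" "v = Psi w" by auto
      have "Eop (r t) (Aop (r t - j) (Eop j w)) \<in> fvs.span H" if t: "t \<in> {1..p}" and j: "j \<in> {0..e}" for t j
      proof -
        have k: "r t - rho W \<le> delta W" and rt: "rho W + (r t - rho W) = r t" using rt_le[OF t] by auto
        have u: "cv (r t - rho W) \<in> W" "Eop (r t) (cv (r t - rho W)) = cv (r t - rho W)" "cv (r t - rho W) \<noteq> 0"
          using cvp[OF k] rt by auto
        have bd: "r t \<le> d" "r t - j \<le> d" "j \<le> d" using r_bounds[OF t] j e_d by auto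
        have X: "Aop (r t - j) (Eop j w) \<in> W"
          using Tm_A[OF W_T[OF irr] bd(2) Tm_E[OF W_T[OF irr] bd(3) w(1)]] .
        obtain a where a: "Eop (r t) (Aop (r t - j) (Eop j w)) = fscale a (cv (r t - rho W))"
          using thin_span[OF irr thin bd(1) u X] by blast
        show ?thesis unfolding a H_def using t by (intro fvs.span_scale fvs.span_base) auto
      qed
      then show "v \<in> fvs.span H"
        unfolding w(2) Psi_def by (intro fvs.span_sum) auto
    qed
    then have "fvs.dim (Psi ` W) \<le> card H" by (rule fvs.dim_le_card) (simp add: H_def)
    also have "\<dots> \<le> card {1..p}" unfolding H_def by (rule card_image_le) simp
    also have "\<dots> = e + 1 - j0" using j0r e_ge p_pos by simp
    finally show ?thesis .
  qed
  show ?thesis using rhs lower upper by simp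
qed

end

end

lemma lin_img_sub:
  fixes L :: "('a::finite \<Rightarrow> complex) \<Rightarrow> ('a \<Rightarrow> complex)"
  assumes add: "\<And>x y. L (x + y) = L x + L y" and sc: "\<And>c x. L (fscale c x) = fscale c (L x)"
    and W: "fvs.subspace W"
  shows "fvs.subspace (L ` W)"
proof -
  have f0: "fscale (0::complex) (0::'a \<Rightarrow> complex) = 0" unfolding fscale_def by (rule ext) simp
  have f1: "fscale (0::complex) (L 0) = 0" unfolding fscale_def by (rule ext) simp
  have L0: "L 0 = 0" using sc[of 0 0] unfolding f0 f1 .
  show ?thesis unfolding fvs.subspace_def
  proof (intro conjI ballI allI)
    show "0 \<in> L ` W" using W L0 fvs.subspace_0 by (metis image_eqI)
    fix x y assume "x \<in> L ` W" "y \<in> L ` W"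
    then obtain x' y' where "x' \<in> W" "y' \<in> W" "x = L x'" "y = L y'" by auto
    then show "x + y \<in> L ` W" using add W fvs.subspace_add by (metis image_eqI)
  next
    fix c x assume "x \<in> L ` W"
    then obtain x' where "x' \<in> W" "x = L x'" by auto
    then show "fscale c x \<in> L ` W" using sc W fvs.subspace_scale by (metis image_eqI)
  qed
qed

lemma add_dim:
  fixes L :: "('a::finite \<Rightarrow> complex) \<Rightarrow> ('a \<Rightarrow> complex)"
  assumes add: "\<And>x y. L (x + y) = L x + L y" and sc: "\<And>c x. L (fscale c x) = fscale c (L x)"
    and W: "fvs.subspace W" and V: "fvs.subspace V" and int: "W \<inter> V \<subseteq> {0}"
    and LW: "L ` W \<subseteq> W" and LV: "L ` V \<subseteq> V"
    and U: "U = {x + y |x y. x \<in> W \<and> y \<in> V}"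
  shows "fvs.dim (L ` U) = fvs.dim (L ` W) + fvs.dim (L ` V)"
proof -
  have sW: "fvs.subspace (L ` W)" by (rule lin_img_sub[OF add sc W])
  have sV: "fvs.subspace (L ` V)" by (rule lin_img_sub[OF add sc V])
  have eq: "L ` U = {x + y |x y. x \<in> L ` W \<and> y \<in> L ` V}"
  proof
    show "L ` U \<subseteq> {x + y |x y. x \<in> L ` W \<and> y \<in> L ` V}"
    proof
      fix z assume "z \<in> L ` U"
      then obtain x y where "x \<in> W" "y \<in> V" "z = L (x + y)" unfolding U by blast
      then show "z \<in> {x + y |x y. x \<in> L ` W \<and> y \<in> L ` V}" unfolding add by blast
    qed
    show "{x + y |x y. x \<in> L ` W \<and> y \<in> L ` V} \<subseteq> L ` U"
    proof
      fix z assume "z \<in> {x + y |x y. x \<in> L ` W \<and> y \<in> L ` V}"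
      then obtain x y where "x \<in> W" "y \<in> V" "z = L x + L y" by blast
      then have "z = L (x + y)" "x + y \<in> U" unfolding add U by blast+
      then show "z \<in> L ` U" by blast
    qed
  qed
  have "fvs.dim (L ` U) + fvs.dim (L ` W \<inter> L ` V) = fvs.dim (L ` W) + fvs.dim (L ` V)"
    unfolding eq by (rule ffd.dim_sums_Int[OF sW sV])
  moreover have "L ` W \<inter> L ` V \<subseteq> {0}" using LW LV int by blast
  then have "fvs.dim (L ` W \<inter> L ` V) = 0" by (simp only: ffd.dim_eq_0)
  ultimately show ?thesis by simp
qed

context pmain begin

lemma irr_count:
  assumes irr: "irreducible_T_module d R u0 W"
    and mh: "rho W \<le> e \<Longrightarrow> thin_module d R u0 W \<and> r p \<le> rho W + delta W"
    and det: "det (c_matrix R p e r) \<noteq> 0"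
  shows "fvs.dim (Psi ` W) = (\<Sum>j\<in>{e + 1 - p..e}. fvs.dim (Eop j ` W))"
proof (cases "rho W \<le> e")
  case True
  obtain w0 where w0: "w0 \<in> W" "Eop (rho W) w0 \<noteq> 0" using rho_in[OF irr] in_supp[OF irr] by blast
  show ?thesis using count_B[OF irr _ _ w0 True det] mh True by blast
next
  case False
  have z: "\<forall>w\<in>W. Eop j w = 0" if j: "j \<le> e" for j
  proof -
    have "j \<notin> supp W" using rho_le[OF irr] False j by force
    then show ?thesis using in_supp[OF irr] j e_d by auto
  qed
  have "Psi w = 0" if w: "w \<in> W" for w
    unfolding Psi_def using z w by (simp add: cmat_apply_zero)
  then have "Psi ` W \<subseteq> {0}" by auto
  then have l: "fvs.dim (Psi ` W) = 0" by (simp only: ffd.dim_eq_0)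
  have h: "\<forall>j\<in>{e + 1 - p..e}. fvs.dim (Eop j ` W) = 0"
  proof
    fix j assume "j \<in> {e + 1 - p..e}"
    then have "Eop j ` W \<subseteq> {0}" using z by auto
    then show "fvs.dim (Eop j ` W) = 0" by (simp only: ffd.dim_eq_0)
  qed
  have "(\<Sum>j\<in>{e + 1 - p..e}. fvs.dim (Eop j ` W)) = 0" using h by (rule sum.neutral)
  then show ?thesis using l by linarith
qed

lemma main_count:
  assumes modules: "\<forall>W. irreducible_T_module d R u0 W \<and> endpoint d R u0 W \<le> e \<longrightarrow>
        thin_module d R u0 W \<and> r p \<le> endpoint d R u0 W + module_diameter d R u0 W"
    and det: "det (c_matrix R p e r) \<noteq> 0"
  shows "T_module d R u0 U \<Longrightarrow> fvs.dim (Psi ` U) = (\<Sum>j\<in>{e + 1 - p..e}. fvs.dim (Eop j ` U))"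
proof (induction "fvs.dim U" arbitrary: U rule: less_induct)
  case less
  note TU = less.prems
  have sU: "fvs.subspace U" using TU by (rule Tm_sub)
  show ?case
  proof (cases "U \<subseteq> {0}")
    case True
    then have "Psi ` U \<subseteq> {0}" using Psi_zero by auto
    then have l: "fvs.dim (Psi ` U) = 0" by (simp only: ffd.dim_eq_0)
    have h: "\<forall>j\<in>{e + 1 - p..e}. fvs.dim (Eop j ` U) = 0"
    proof
      fix j
      have "Eop j ` U \<subseteq> {0}" using True cmat_apply_zero by auto
      then show "fvs.dim (Eop j ` U) = 0" by (simp only: ffd.dim_eq_0)
    qed
    have "(\<Sum>j\<in>{e + 1 - p..e}. fvs.dim (Eop j ` U)) = 0" using h by (rule sum.neutral)
    then show ?thesis using l by linarith
  next
    case False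
    define P where "P V \<longleftrightarrow> T_module d R u0 V \<and> V \<subseteq> U \<and> \<not> V \<subseteq> {0}" for V
    have PU: "P U" using TU False by (simp add: P_def)
    obtain W where PW: "P W" and Wmin: "\<And>V. P V \<Longrightarrow> fvs.dim W \<le> fvs.dim V"
      using ex_has_least_nat[of P U "fvs.dim", OF PU] by blast
    have TW: "T_module d R u0 W" and WU: "W \<subseteq> U" and Wnz: "\<not> W \<subseteq> {0}" using PW by (auto simp: P_def)
    have sW: "fvs.subspace W" using TW by (rule Tm_sub)
    have irr: "irreducible_T_module d R u0 W"
      unfolding irreducible_T_module_def
    proof (intro conjI allI impI)
      show "T_module d R u0 W" by (rule TW)
      show "W \<noteq> {0}" using Wnz by auto
      fix W' assume W': "T_module d R u0 W' \<and> W' \<subseteq> W"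
      show "W' = {0} \<or> W' = W"
      proof (cases "W' \<subseteq> {0}")
        case True
        then have "W' = {0}" using W' Tm_sub fvs.subspace_0 by blast
        then show ?thesis by simp
      next
        case False
        then have "P W'" using W' WU by (auto simp: P_def)
        then have "fvs.dim W \<le> fvs.dim W'" by (rule Wmin)
        then have "W' = W" using ffd.subspace_dim_equal[of W' W] W' Tm_sub sW by blast
        then show ?thesis by simp
      qed
    qed
    define U' where "U' = U \<inter> perp W"
    have TU': "T_module d R u0 U'" unfolding U'_def by (rule Tm_Int[OF TU Tm_perp[OF TW]])
    have sU': "fvs.subspace U'" using TU' by (rule Tm_sub)
    have int: "W \<inter> U' \<subseteq> {0}"
      using ip_self_zero by (auto simp: U'_def perp_def)
    have Ueq: "U = {x + y |x y. x \<in> W \<and> y \<in> U'}"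
    proof
      show "U \<subseteq> {x + y |x y. x \<in> W \<and> y \<in> U'}"
      proof
        fix v assume v: "v \<in> U"
        obtain w u where wu: "w \<in> W" "u \<in> perp W" "v = w + u" using ortho_decomp[OF sW, of v] by blast
        have "u = v - w" using wu by simp
        then have "u \<in> U" using v wu(1) WU sU fvs.subspace_diff by blast
        then show "v \<in> {x + y |x y. x \<in> W \<and> y \<in> U'}" using wu by (auto simp: U'_def)
      qed
      show "{x + y |x y. x \<in> W \<and> y \<in> U'} \<subseteq> U"
        using WU sU fvs.subspace_add by (auto simp: U'_def)
    qed
    have dimU: "fvs.dim U = fvs.dim W + fvs.dim U'"
    proof -
      have "fvs.dim U + fvs.dim (W \<inter> U') = fvs.dim W + fvs.dim U'"
        unfolding Ueq by (rule ffd.dim_sums_Int[OF sW sU'])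
      moreover have "fvs.dim (W \<inter> U') = 0" using int by (simp only: ffd.dim_eq_0)
      ultimately show ?thesis by simp
    qed
    have "fvs.dim W \<noteq> 0"
    proof
      assume "fvs.dim W = 0"
      then have "W \<subseteq> {0}" by (simp only: ffd.dim_eq_0)
      then show False using Wnz by simp
    qed
    then have lt: "fvs.dim U' < fvs.dim U" using dimU by linarith
    have IH: "fvs.dim (Psi ` U') = (\<Sum>j\<in>{e + 1 - p..e}. fvs.dim (Eop j ` U'))"
      using less.hyps[OF lt TU'] .
    have mhW: "rho W \<le> e \<Longrightarrow> thin_module d R u0 W \<and> r p \<le> rho W + delta W"
      using modules irr by blast
    have IW: "fvs.dim (Psi ` W) = (\<Sum>j\<in>{e + 1 - p..e}. fvs.dim (Eop j ` W))"
      by (rule irr_count[OF irr mhW det])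
    have PsiU: "fvs.dim (Psi ` U) = fvs.dim (Psi ` W) + fvs.dim (Psi ` U')"
      by (rule add_dim[OF Psi_add Psi_scale sW sU' int _ _ Ueq])
         (use Psi_T[OF TW] Psi_T[OF TU'] in auto)
    have EU: "fvs.dim (Eop j ` U) = fvs.dim (Eop j ` W) + fvs.dim (Eop j ` U')" if j: "j \<in> {e + 1 - p..e}" for j
    proof -
      have jd: "j \<le> d" using j e_d by simp
      show ?thesis
        by (rule add_dim[OF cmat_apply_add cmat_apply_scale sW sU' int _ _ Ueq])
           (use Tm_E[OF TW jd] Tm_E[OF TU' jd] in auto)
    qed
    show ?thesis unfolding PsiU IW IH using EU by (simp add: sum.distrib)
  qed
qed

end

lemma restr_add: "restr S (f + g) = restr S f + restr S g"
  by (rule ext) (simp add: restr_def)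
lemma restr_scale: "restr S (fscale c f) = fscale c (restr S f)"
  by (rule ext) (simp add: restr_def fscale_apply)

lemma restr_span: "restr S ` fvs.span X \<subseteq> fvs.span (restr S ` X)"
proof -
  have "fvs.span X \<subseteq> {y. restr S y \<in> fvs.span (restr S ` X)}"
  proof (rule fvs.span_minimal)
    show "X \<subseteq> {y. restr S y \<in> fvs.span (restr S ` X)}" by (auto intro: fvs.span_base)
    show "fvs.subspace {y. restr S y \<in> fvs.span (restr S ` X)}"
      unfolding fvs.subspace_def
    proof (intro conjI ballI allI)
      have "restr S 0 = (0 :: 'a \<Rightarrow> real)" by (rule ext) (simp add: restr_def)
      then show "0 \<in> {y. restr S y \<in> fvs.span (restr S ` X)}" by (simp add: fvs.span_zero)
    next
      fix x y assume "x \<in> {y. restr S y \<in> fvs.span (restr S ` X)}" "y \<in> {y. restr S y \<in> fvs.span (restr S ` X)}"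
      then show "x + y \<in> {y. restr S y \<in> fvs.span (restr S ` X)}"
        by (simp add: restr_add fvs.span_add)
    next
      fix c x assume "x \<in> {y. restr S y \<in> fvs.span (restr S ` X)}"
      then show "fscale c x \<in> {y. restr S y \<in> fvs.span (restr S ` X)}"
        by (simp add: restr_scale fvs.span_scale)
    qed
  qed
  then show ?thesis by auto
qed

context pmain begin

definition SS where "SS = (\<Union>i\<in>{1..p}. shell R u0 (r i))"

lemma Psi_sum: "Psi (\<Sum>i\<in>I. f i) = (\<Sum>i\<in>I. Psi (f i))"
proof (induction I rule: infinite_finite_induct)
  case (infinite A) then show ?case by (simp only: sum.infinite[OF infinite] Psi_zero)
next
  case empty then show ?case by (simp only: sum.empty Psi_zero)
next
  case (insert x F) then show ?case by (simp only: sum.insert[OF insert(1,2)] Psi_add)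
qed

lemma Eop_ind: "j \<le> d \<Longrightarrow> Eop j (ind z) = (if j = dist u0 z then ind z else 0)"
  by (rule ext) (auto simp: Eop_apply ind_def)

lemma EA_ind: "j \<le> d \<Longrightarrow> m \<le> d \<Longrightarrow> Eop j (Aop m (ind z)) x = (if dist u0 x = j \<and> dist x z = m then 1 else 0)"
proof -
  assume j: "j \<le> d" and m: "m \<le> d"
  have "(\<Sum>y\<in>UNIV. if dist x y = m then (ind z y :: complex) else 0) = (\<Sum>y\<in>UNIV. if y = z then (if dist x z = m then 1 else 0) else 0)"
    by (intro sum.cong refl) (auto simp: ind_def)
  then show ?thesis unfolding Eop_apply[OF j] Aop_apply[OF m] by simp
qed

lemma Psi_ind:
  assumes jz: "dist u0 z \<le> e"
  shows "Psi (ind z) = cx (restr SS (fz d R u0 (dist u0 z) z))"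
proof (rule ext)
  fix x
  define jz where "jz = dist u0 z"
  have "Psi (ind z) = (\<Sum>t\<in>{1..p}. \<Sum>j\<in>{0..e}. if j = jz then Eop (r t) (Aop (r t - jz) (ind z)) else 0)"
    unfolding Psi_def
  proof (intro sum.cong refl)
    fix t j assume "j \<in> {0..e}"
    then have "j \<le> d" using e_d by simp
    then show "Eop (r t) (Aop (r t - j) (Eop j (ind z))) = (if j = jz then Eop (r t) (Aop (r t - jz) (ind z)) else 0)"
      by (simp add: Eop_ind jz_def cmat_apply_zero)
  qed
  also have "\<dots> = (\<Sum>t\<in>{1..p}. Eop (r t) (Aop (r t - jz) (ind z)))"
    using jz by (simp add: sum.delta jz_def)
  finally have "Psi (ind z) x = (\<Sum>t\<in>{1..p}. Eop (r t) (Aop (r t - jz) (ind z)) x)"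
    by (simp add: sum_fun_apply)
  also have "\<dots> = (\<Sum>t\<in>{1..p}. if dist u0 x = r t \<and> dist x z = r t - jz then 1 else 0)"
  proof (intro sum.cong refl)
    fix t assume t: "t \<in> {1..p}"
    have "r t \<le> d" "r t - jz \<le> d" using r_bounds[OF t] by auto
    then show "Eop (r t) (Aop (r t - jz) (ind z)) x = (if dist u0 x = r t \<and> dist x z = r t - jz then 1 else 0)"
      by (rule EA_ind)
  qed
  also have "\<dots> = cx (restr SS (fz d R u0 jz z)) x"
  proof (cases "x \<in> SS")
    case True
    then obtain t0 where t0: "t0 \<in> {1..p}" "(u0, x) \<in> R (r t0)" by (auto simp: SS_def shell_def)
    have b: "e \<le> r t0" "r t0 \<le> d" using r_bounds[OF t0(1)] by auto
    have dx: "dist u0 x = r t0" using t0(2) R_iff[OF b(2)] by simp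
    have "(\<Sum>t\<in>{1..p}. if dist u0 x = r t \<and> dist x z = r t - jz then (1::complex) else 0)
        = (\<Sum>t\<in>{1..p}. if t = t0 then (if dist x z = r t0 - jz then 1 else 0) else 0)"
      using r_inj t0(1) dx by (intro sum.cong refl) auto
    also have "\<dots> = (if dist x z = r t0 - jz then 1 else 0)" using t0(1) by simp
    also have "\<dots> = cx (restr SS (fz d R u0 jz z)) x"
    proof -
      have "(\<exists>i. jz \<le> i \<and> i \<le> d \<and> (u0, x) \<in> R i \<and> (x, z) \<in> R (i - jz)) \<longleftrightarrow> dist x z = r t0 - jz"
      proof
        assume "\<exists>i. jz \<le> i \<and> i \<le> d \<and> (u0, x) \<in> R i \<and> (x, z) \<in> R (i - jz)"
        then obtain i where i: "jz \<le> i" "i \<le> d" "(u0, x) \<in> R i" "(x, z) \<in> R (i - jz)" by blast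
        have "i = r t0" using i(3) R_iff[OF i(2)] dx by simp
        moreover have "i - jz \<le> d" using i(2) by simp
        ultimately show "dist x z = r t0 - jz" using i(4) R_iff by blast
      next
        assume dz: "dist x z = r t0 - jz"
        have "jz \<le> r t0" using jz b jz_def by simp
        moreover have "(x, z) \<in> R (r t0 - jz)" using dz R_iff[of "r t0 - jz" x z] b by simp
        ultimately show "\<exists>i. jz \<le> i \<and> i \<le> d \<and> (u0, x) \<in> R i \<and> (x, z) \<in> R (i - jz)"
          using t0(2) b by blast
      qed
      then show ?thesis using True by (simp add: cx_def restr_def fz_def)
    qed
    finally show ?thesis .
  next
    case False
    have "\<forall>t\<in>{1..p}. dist u0 x \<noteq> r t"
    proof
      fix t assume t: "t \<in> {1..p}"
      show "dist u0 x \<noteq> r t"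
      proof
        assume "dist u0 x = r t"
        then have "(u0, x) \<in> R (r t)" using in_R_dist by metis
        then show False using False t by (auto simp: SS_def shell_def)
      qed
    qed
    then have "(\<Sum>t\<in>{1..p}. if dist u0 x = r t \<and> dist x z = r t - jz then (1::complex) else 0) = 0"
      by (intro sum.neutral) auto
    then show ?thesis using False by (simp add: cx_def restr_def)
  qed
  finally show "Psi (ind z) x = cx (restr SS (fz d R u0 (dist u0 z) z)) x" by (simp add: jz_def)
qed

lemma Psi_ind0:
  assumes jz: "e < dist u0 z"
  shows "Psi (ind z) = 0"
  unfolding Psi_def
proof (intro sum.neutral ballI)
  fix t j assume "t \<in> {1..p}" "j \<in> {0..e}"
  moreover have "j \<le> d" using calculation e_d by simp
  ultimately show "Eop (r t) (Aop (r t - j) (Eop j (ind z))) = 0"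
    using jz by (simp add: Eop_ind cmat_apply_zero)
qed

definition GG where "GG = (\<Union>j\<in>{0..e}. restr SS ` fz d R u0 j ` shell R u0 j)"

lemma span_GG: "fvs.span (cx ` GG) = Psi ` UNIV"
proof
  have sub: "fvs.subspace (Psi ` UNIV)" by (rule lin_img_sub[OF Psi_add Psi_scale]) simp
  have "cx ` GG \<subseteq> Psi ` UNIV"
  proof
    fix g assume "g \<in> cx ` GG"
    then obtain j z where jz: "j \<in> {0..e}" "z \<in> shell R u0 j" "g = cx (restr SS (fz d R u0 j z))"
      by (auto simp: GG_def)
    have "dist u0 z = j" using jz(1,2) e_d R_iff by (auto simp: shell_def)
    then have "g = Psi (ind z)" using Psi_ind jz by simp
    then show "g \<in> Psi ` UNIV" by simp
  qed
  then show "fvs.span (cx ` GG) \<subseteq> Psi ` UNIV" using fvs.span_minimal[OF _ sub] by blast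
next
  show "Psi ` UNIV \<subseteq> fvs.span (cx ` GG)"
  proof
    fix g assume "g \<in> Psi ` UNIV"
    then obtain v where v: "g = Psi v" by auto
    have "g = (\<Sum>a\<in>UNIV. fscale (v a) (Psi (ind a)))"
      unfolding v by (subst fun_expand_ind) (simp only: Psi_sum Psi_scale)
    also have "\<dots> \<in> fvs.span (cx ` GG)"
    proof (intro fvs.span_sum fvs.span_scale)
      fix a :: 'a
      show "Psi (ind a) \<in> fvs.span (cx ` GG)"
      proof (cases "dist u0 a \<le> e")
        case True
        have sh: "a \<in> shell R u0 (dist u0 a)" using in_R_dist[of u0 a] by (simp add: shell_def)
        have "restr SS (fz d R u0 (dist u0 a) a) \<in> GG"
          unfolding GG_def by (rule UN_I[where a="dist u0 a"]) (use True sh in auto)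
        then show ?thesis using Psi_ind[OF True] by (auto intro: fvs.span_base)
      next
        case False
        then show ?thesis using Psi_ind0 by (simp add: fvs.span_zero)
      qed
    qed
    finally show "g \<in> fvs.span (cx ` GG)" .
  qed
qed

lemma span_HomS: "fvs.span (\<Union>j\<in>{0..e}. HomS d R u0 j SS) = fvs.span GG"
  unfolding fvs.span_eq
proof
  show "(\<Union>j\<in>{0..e}. HomS d R u0 j SS) \<subseteq> fvs.span GG"
  proof
    fix f assume "f \<in> (\<Union>j\<in>{0..e}. HomS d R u0 j SS)"
    then obtain j where j: "j \<in> {0..e}" "f \<in> restr SS ` fvs.span (fz d R u0 j ` shell R u0 j)"
      by (auto simp: HomS_def HomX_def)
    then have "f \<in> fvs.span (restr SS ` fz d R u0 j ` shell R u0 j)" using restr_span by blast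
    moreover have "restr SS ` fz d R u0 j ` shell R u0 j \<subseteq> GG" using j(1) by (auto simp: GG_def)
    ultimately show "f \<in> fvs.span GG" using fvs.span_mono by blast
  qed
  show "GG \<subseteq> fvs.span (\<Union>j\<in>{0..e}. HomS d R u0 j SS)"
  proof
    fix f assume "f \<in> GG"
    then obtain j z where j: "j \<in> {0..e}" "z \<in> shell R u0 j" "f = restr SS (fz d R u0 j z)"
      by (auto simp: GG_def)
    have "fz d R u0 j z \<in> fvs.span (fz d R u0 j ` shell R u0 j)" using j(2) by (auto intro: fvs.span_base)
    then have "f \<in> HomS d R u0 j SS" using j(3) by (auto simp: HomS_def HomX_def)
    then have "f \<in> (\<Union>j\<in>{0..e}. HomS d R u0 j SS)" using j(1) by blast
    then show "f \<in> fvs.span (\<Union>j\<in>{0..e}. HomS d R u0 j SS)" by (rule fvs.span_base)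
  qed
qed

lemma dim_Eop_UNIV: "j \<le> d \<Longrightarrow> fvs.dim (Eop j ` UNIV) = kval R u0 j"
proof -
  assume j: "j \<le> d"
  have "Eop j ` UNIV = {f :: 'a \<Rightarrow> complex. \<forall>x. x \<notin> shell R u0 j \<longrightarrow> f x = 0}"
  proof
    show "Eop j ` UNIV \<subseteq> {f. \<forall>x. x \<notin> shell R u0 j \<longrightarrow> f x = 0}"
      using j R_iff by (auto simp: Eop_apply shell_def)
    show "{f. \<forall>x. x \<notin> shell R u0 j \<longrightarrow> f x = 0} \<subseteq> Eop j ` UNIV"
    proof
      fix f :: "'a \<Rightarrow> complex" assume f: "f \<in> {f. \<forall>x. x \<notin> shell R u0 j \<longrightarrow> f x = 0}"
      have "Eop j f = f" using f j R_iff by (auto simp: Eop_apply shell_def fun_eq_iff)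
      then show "f \<in> Eop j ` UNIV" by (metis rangeI)
    qed
  qed
  then show ?thesis using dim_support by (simp add: kval_def)
qed

end

theorem theorem2p1:
  fixes d :: nat and R :: "nat \<Rightarrow> ('a::finite \<times> 'a) set" and u0 :: 'a
    and e p :: nat and r :: "nat \<Rightarrow> nat"
  assumes scheme: "P_polynomial_scheme d R"
    and p_pos: "1 \<le> p"
    and e_ge: "p - 1 \<le> e" and e_le: "e \<le> r 1"
    and r_mono: "\<forall>i. 1 \<le> i \<and> i < p \<longrightarrow> r i < r (i + 1)"
    and r_le: "r p \<le> d"
    and modules: "\<forall>W. irreducible_T_module d R u0 W \<and> endpoint d R u0 W \<le> e \<longrightarrow>
        thin_module d R u0 W \<and> r p \<le> endpoint d R u0 W + module_diameter d R u0 W"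
    and nonsing: "det (c_matrix R p e r) \<noteq> 0"
  shows "vector_space.dim (fscale :: real \<Rightarrow> _)
           (module.span (fscale :: real \<Rightarrow> _)
              (\<Union>j\<in>{0..e}. HomS d R u0 j (\<Union>i\<in>{1..p}. shell R u0 (r i))))
         = (\<Sum>j\<in>{e + 1 - p..e}. kval R u0 j)"
proof -
  interpret pm: pmain d R u0 e p r
    by unfold_locales (use scheme p_pos e_ge e_le r_mono r_le in auto)
  have TU: "T_module d R u0 UNIV"
    by (rule pm.T_module_gen) (auto simp: fvs.subspace_def)
  have "vector_space.dim (fscale :: real \<Rightarrow> _)
           (module.span (fscale :: real \<Rightarrow> _)
              (\<Union>j\<in>{0..e}. HomS d R u0 j (\<Union>i\<in>{1..p}. shell R u0 (r i))))
      = fvs.dim (fvs.span pm.GG)"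
    using pm.span_HomS by (simp add: pm.SS_def)
  also have "\<dots> = fvs.dim (fvs.span (cx ` pm.GG))" by (rule dim_complexify)
  also have "\<dots> = fvs.dim (pm.Psi ` UNIV)" by (simp only: pm.span_GG)
  also have "\<dots> = (\<Sum>j\<in>{e + 1 - p..e}. fvs.dim (pm.Eop j ` UNIV))"
    by (rule pm.main_count[OF modules nonsing TU])
  also have "\<dots> = (\<Sum>j\<in>{e + 1 - p..e}. kval R u0 j)"
    using pm.e_d by (intro sum.cong refl pm.dim_Eop_UNIV) auto
  finally show ?thesis .
qed

end
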